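(* Let $\widehat{G}$ be a signed bigraph whose underlying bigraph is non-separable. Then $\widehat{G}$ is chordal if and only if it does not contain any signed graph in $F_1\cup F_2\cup\cdots\cup F_6$ as an induced subgraph, where: $F_1$: $K_{2,2}$ with all four edges negative; $F_2$: complete bigraph with parts $\{a_1,a_2\}$, $\{b_1,b_2,b_3\}$, $a_1b_1,a_1b_2,a_2b_2,a_2b_3$ negative, $a_1b_3,a_2b_1$ free; $F_3$: complete bigraph with parts $\{a_1,a_2\}$, $\{b_1,\dots,b_4\}$, $a_1b_1,a_1b_2,a_2b_3,a_2b_4$ negative, the other four edges free; $F_4$: complete bigraph with parts $\{a_1,a_2,a_3\}$, $\{b_1,b_2,b_3\}$, $a_1b_1,a_2b_2,a_3b_3$ negative, the other six edges free; $F_5$: bigraph with parts $\{a_1,a_2,a_3\}$, $\{b_1,b_2,b_3\}$ having all nine possible edges except $a_1b_3$, with $a_2b_1,a_3b_2$ negative and the other six edges free; $F_6$: bigraph with parts $\{a_1,\dots,a_4\}$, $\{b_1,\dots,b_4\}$ in which $a_1,a_2$ are adjacent exactly to $b_1,b_2$ and $a_3,a_4$ are adjacent to all of $b_1,\dots,b_4$, with $a_1b_1,a_2b_1,a_3b_2,a_4b_3,a_4b_4$ negative and the other seven edges free.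
   Context: A signed graph is a finite simple graph each of whose edges is assigned a sign, positive or negative. A signed bigraph is a signed graph whose underlying graph is bipartite, with bipartition $(X,Y)$. A bigraph is separable if it contains an induced $2K_2$, non-separable otherwise. An induced subgraph is obtained by deleting vertices only (signs are inherited); $\widehat G$ contains $H$ as an induced subgraph if some induced subgraph of $\widehat G$ is isomorphic to $H$ via a sign-preserving isomorphism. A signed graph is positive if all its edges are positive. In a bigraph with bipartition $(X,Y)$, a subgraph $H$ is a biclique if every vertex of $V(H)\cap X$ is adjacent to every vertex of $V(H)\cap Y$. For an edge $uv$, $N(uv)=(N(u)\cup N(v))\setminus\{u,v\}$. An edge $uv$ of a signed bigraph is signed simplicial if $N(uv)$ induces a positive biclique. A signed bigraph $\widehat G$ is chordal if its edges can be ordered $e_1,\dots,e_m$ so that each $e_i$ is signed simplicial in the signed bigraph $\widehat G-\{e_1,\dots,e_{i-1}\}$ obtained by deleting these edges (but no vertices). A family described by a graph with some edges declared negative, some positive, and the rest declared free, is the set of all signed graphs obtained by giving each free edge an arbitrary sign. *)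

theory Defs
  imports Main
begin

text \<open>A signed graph on vertex set V: edges are 2-element sets of vertices,
  N is the set of negative edges (the other edges are positive).\<close>

definition signed_graph :: "'v set \<Rightarrow> 'v set set \<Rightarrow> 'v set set \<Rightarrow> bool" where
  "signed_graph V E N \<longleftrightarrow> finite V \<and>
     E \<subseteq> {{u, v} | u v. u \<in> V \<and> v \<in> V \<and> u \<noteq> v} \<and> N \<subseteq> E"

definition signed_bigraph :: "'v set \<Rightarrow> 'v set \<Rightarrow> 'v set set \<Rightarrow> 'v set set \<Rightarrow> bool" where
  "signed_bigraph X Y E N \<longleftrightarrow> signed_graph (X \<union> Y) E N \<and> X \<inter> Y = {} \<and>
     (\<forall>e\<in>E. \<exists>x\<in>X. \<exists>y\<in>Y. e = {x, y})"

definition separable :: "'v set set \<Rightarrow> bool" where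
  "separable E \<longleftrightarrow> (\<exists>a b c d. distinct [a, b, c, d] \<and> {a, b} \<in> E \<and> {c, d} \<in> E \<and>
     {a, c} \<notin> E \<and> {a, d} \<notin> E \<and> {b, c} \<notin> E \<and> {b, d} \<notin> E)"

definition nbr :: "'v set set \<Rightarrow> 'v \<Rightarrow> 'v set" where
  "nbr E u = {w. {u, w} \<in> E}"

definition edge_nbhd :: "'v set set \<Rightarrow> 'v set \<Rightarrow> 'v set" where
  "edge_nbhd E e = (\<Union>u\<in>e. nbr E u) - e"

definition positive_biclique :: "'v set \<Rightarrow> 'v set \<Rightarrow> 'v set set \<Rightarrow> 'v set set \<Rightarrow> 'v set \<Rightarrow> bool" where
  "positive_biclique X Y E N S \<longleftrightarrow>
     (\<forall>x\<in>S \<inter> X. \<forall>y\<in>S \<inter> Y. {x, y} \<in> E) \<and> (\<forall>e\<in>E. e \<subseteq> S \<longrightarrow> e \<notin> N)"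

definition signed_simplicial :: "'v set \<Rightarrow> 'v set \<Rightarrow> 'v set set \<Rightarrow> 'v set set \<Rightarrow> 'v set \<Rightarrow> bool" where
  "signed_simplicial X Y E N e \<longleftrightarrow> positive_biclique X Y E N (edge_nbhd E e)"

text \<open>Chordal: an ordering e_1..e_m of all edges with e_i signed simplicial in
  G - {e_1..e_(i-1)} (edges deleted, vertices kept, signs inherited).\<close>
definition chordal :: "'v set \<Rightarrow> 'v set \<Rightarrow> 'v set set \<Rightarrow> 'v set set \<Rightarrow> bool" where
  "chordal X Y E N \<longleftrightarrow> (\<exists>es. distinct es \<and> set es = E \<and>
     (\<forall>i < length es. signed_simplicial X Y (E - set (take i es)) (N - set (take i es)) (es ! i)))"

definition contains_induced ::
  "'v set \<Rightarrow> 'v set set \<Rightarrow> 'v set set \<Rightarrow> ('w set \<times> 'w set set \<times> 'w set set) \<Rightarrow> bool" where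
  "contains_induced V E N H \<longleftrightarrow> (case H of (VH, EH, NH) \<Rightarrow>
     (\<exists>f. inj_on f VH \<and> f ` VH \<subseteq> V \<and>
        (\<forall>u\<in>VH. \<forall>v\<in>VH. ({f u, f v} \<in> E \<longleftrightarrow> {u, v} \<in> EH) \<and>
                        ({f u, f v} \<in> N \<longleftrightarrow> {u, v} \<in> NH))))"

datatype fv = A nat | B nat

definition ed :: "nat \<Rightarrow> nat \<Rightarrow> fv set" where
  "ed i j = {A i, B j}"

text \<open>Family: graph (V, Eall), edges in Neg negative, the remaining edges free.\<close>
definition family :: "fv set \<Rightarrow> fv set set \<Rightarrow> fv set set \<Rightarrow> (fv set \<times> fv set set \<times> fv set set) set" where
  "family V Eall Neg = {(V, Eall, Neg \<union> S) | S. S \<subseteq> Eall - Neg}"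

definition complete_edges :: "nat set \<Rightarrow> nat set \<Rightarrow> fv set set" where
  "complete_edges I J = {ed i j | i j. i \<in> I \<and> j \<in> J}"

definition verts :: "nat set \<Rightarrow> nat set \<Rightarrow> fv set" where
  "verts I J = A ` I \<union> B ` J"

definition F1 where
  "F1 = family (verts {1,2} {1,2}) (complete_edges {1,2} {1,2}) (complete_edges {1,2} {1,2})"

definition F2 where
  "F2 = family (verts {1,2} {1,2,3}) (complete_edges {1,2} {1,2,3})
     {ed 1 1, ed 1 2, ed 2 2, ed 2 3}"

definition F3 where
  "F3 = family (verts {1,2} {1,2,3,4}) (complete_edges {1,2} {1,2,3,4})
     {ed 1 1, ed 1 2, ed 2 3, ed 2 4}"

definition F4 where
  "F4 = family (verts {1,2,3} {1,2,3}) (complete_edges {1,2,3} {1,2,3})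
     {ed 1 1, ed 2 2, ed 3 3}"

definition F5 where
  "F5 = family (verts {1,2,3} {1,2,3}) (complete_edges {1,2,3} {1,2,3} - {ed 1 3})
     {ed 2 1, ed 3 2}"

definition F6 where
  "F6 = family (verts {1,2,3,4} {1,2,3,4})
     (complete_edges {1,2} {1,2} \<union> complete_edges {3,4} {1,2,3,4})
     {ed 1 1, ed 2 1, ed 3 2, ed 4 3, ed 4 4}"

end

theory Submission
  imports Defs
begin

lemma pattern_embed:
  fixes f :: "fv \<Rightarrow> 'v"
  assumes inj: "inj_on f VH" and sub: "f ` VH \<subseteq> V"
    and adj: "\<forall>u\<in>VH. \<forall>v\<in>VH. ({f u, f v} \<in> E \<longleftrightarrow> {u, v} \<in> Eall)"
    and neg: "\<forall>u\<in>VH. \<forall>v\<in>VH. {u, v} \<in> Neg \<longrightarrow> {f u, f v} \<in> N"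
    and NE: "N \<subseteq> E" and NegE: "Neg \<subseteq> Eall"
    and EallV: "\<forall>e\<in>Eall. \<exists>u\<in>VH. \<exists>v\<in>VH. e = {u, v}"
  shows "\<exists>H\<in>family VH Eall Neg. contains_induced V E N H"
proof -
  define S where "S = {e \<in> Eall - Neg. \<exists>u\<in>VH. \<exists>v\<in>VH. e = {u, v} \<and> {f u, f v} \<in> N}"
  have "(VH, Eall, Neg \<union> S) \<in> family VH Eall Neg"
    unfolding family_def S_def by blast
  moreover have "contains_induced V E N (VH, Eall, Neg \<union> S)"
    unfolding contains_induced_def
  proof (simp, intro exI conjI ballI)
    show "inj_on f VH" by fact
    show "f ` VH \<subseteq> V" by fact
    fix u v assume u: "u \<in> VH" and v: "v \<in> VH"
    show "({f u, f v} \<in> E) = ({u, v} \<in> Eall)" using adj u v by blast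
    show "({f u, f v} \<in> N) = ({u, v} \<in> Neg \<or> {u, v} \<in> S)"
    proof
      assume "{f u, f v} \<in> N"
      hence "{u, v} \<in> Eall" using NE adj u v by blast
      thus "{u, v} \<in> Neg \<or> {u, v} \<in> S" unfolding S_def using u v \<open>{f u, f v} \<in> N\<close> by blast
    next
      assume "{u, v} \<in> Neg \<or> {u, v} \<in> S"
      thus "{f u, f v} \<in> N"
      proof
        assume "{u, v} \<in> Neg" thus ?thesis using neg u v by blast
      next
        assume "{u, v} \<in> S"
        then obtain u' v' where "u' \<in> VH" "v' \<in> VH" "{u, v} = {u', v'}" "{f u', f v'} \<in> N"
          unfolding S_def by blast
        moreover have "{f u, f v} = {f u', f v'}" using \<open>{u, v} = {u', v'}\<close>
          by (metis doubleton_eq_iff)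
        ultimately show ?thesis by simp
      qed
    qed
  qed
  ultimately show ?thesis by blast
qed


lemma ed_eq_iff: "{A i, B j} = {A i', B j'} \<longleftrightarrow> i = i' \<and> j = j'"
  by (auto simp: doubleton_eq_iff)

lemma mem_complete_edges:
  "{A i, B j} \<in> complete_edges I J \<longleftrightarrow> i \<in> I \<and> j \<in> J"
  "{B j, A i} \<in> complete_edges I J \<longleftrightarrow> i \<in> I \<and> j \<in> J"
  "{A i, A i'} \<notin> complete_edges I J"
  "{B j, B j'} \<notin> complete_edges I J"
  "{u} \<notin> complete_edges I J"
  unfolding complete_edges_def ed_def by (auto simp: doubleton_eq_iff)

lemma mem_ed_set:
  "{A i, B j} = ed i' j' \<longleftrightarrow> i = i' \<and> j = j'"
  "{B j, A i} = ed i' j' \<longleftrightarrow> i = i' \<and> j = j'"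
  "{A i, A i'} \<noteq> ed i'' j'"
  "{B j, B j'} \<noteq> ed i'' j'"
  "{u} \<noteq> ed i'' j'"
  unfolding ed_def by (auto simp: doubleton_eq_iff)

lemma F1_found:
  assumes d: "distinct [a1,a2,b1,b2]"
    and V: "a1 \<in> V" "a2 \<in> V" "b1 \<in> V" "b2 \<in> V"
    and SA: "\<forall>x\<in>{a1,a2}. \<forall>y\<in>{a1,a2}. {x,y} \<notin> E"
    and SB: "\<forall>x\<in>{b1,b2}. \<forall>y\<in>{b1,b2}. {x,y} \<notin> E"
    and e: "{a1,b1} \<in> E" "{a1,b2} \<in> E" "{a2,b1} \<in> E" "{a2,b2} \<in> E"
    and n: "{a1,b1} \<in> N" "{a1,b2} \<in> N" "{a2,b1} \<in> N" "{a2,b2} \<in> N"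
    and NE: "N \<subseteq> E"
  shows "\<exists>H\<in>F1. contains_induced V E N H"
proof -
  define f where "f u = (case u of A i \<Rightarrow> (if i = 1 then a1 else a2) | B j \<Rightarrow> (if j = 1 then b1 else b2))" for u
  have VH: "verts {1,2} {1,2} = {A 1, A 2, B 1, B 2}" unfolding verts_def by auto
  have fv: "f (A 1) = a1" "f (A 2) = a2" "f (B 1) = b1" "f (B 2) = b2" "f (A (Suc 0)) = a1" "f (B (Suc 0)) = b1" by (simp_all add: f_def)
  show ?thesis unfolding F1_def
  proof (rule pattern_embed[where f = f])
    show "inj_on f (verts {1,2} {1,2})" unfolding VH using d by (simp add: fv)
    show "f ` verts {1,2} {1,2} \<subseteq> V" unfolding VH using V by (simp add: fv)
    show "\<forall>u\<in>verts {1,2} {1,2}. \<forall>v\<in>verts {1,2} {1,2}. ({f u, f v} \<in> E) = ({u, v} \<in> complete_edges {1,2} {1,2})"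
      unfolding VH using SA SB e  by (simp add: fv mem_complete_edges insert_commute ed_def doubleton_eq_iff)
    show "\<forall>u\<in>verts {1,2} {1,2}. \<forall>v\<in>verts {1,2} {1,2}. {u, v} \<in> complete_edges {1,2} {1,2} \<longrightarrow> {f u, f v} \<in> N"
      unfolding VH using n by (simp add: fv ed_def doubleton_eq_iff mem_complete_edges) (simp add: insert_commute)
    show "N \<subseteq> E" by fact
    show "complete_edges {1,2} {1,2} \<subseteq> complete_edges {1,2} {1,2}" by (simp add: ed_def mem_complete_edges doubleton_eq_iff)
    show "\<forall>e\<in>complete_edges {1,2} {1,2}. \<exists>u\<in>verts {1,2} {1,2}. \<exists>v\<in>verts {1,2} {1,2}. e = {u, v}"
      unfolding complete_edges_def verts_def ed_def by blast
  qed
qed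

lemma F2_found:
  assumes d: "distinct [a1,a2,b1,b2,b3]"
    and V: "a1 \<in> V" "a2 \<in> V" "b1 \<in> V" "b2 \<in> V" "b3 \<in> V"
    and SA: "\<forall>x\<in>{a1,a2}. \<forall>y\<in>{a1,a2}. {x,y} \<notin> E"
    and SB: "\<forall>x\<in>{b1,b2,b3}. \<forall>y\<in>{b1,b2,b3}. {x,y} \<notin> E"
    and e: "{a1,b1} \<in> E" "{a1,b2} \<in> E" "{a1,b3} \<in> E" "{a2,b1} \<in> E" "{a2,b2} \<in> E" "{a2,b3} \<in> E"
    and n: "{a1,b1} \<in> N" "{a1,b2} \<in> N" "{a2,b2} \<in> N" "{a2,b3} \<in> N"
    and NE: "N \<subseteq> E"
  shows "\<exists>H\<in>F2. contains_induced V E N H"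
proof -
  define f where "f u = (case u of A i \<Rightarrow> (if i = 1 then a1 else a2) | B j \<Rightarrow> (if j = 1 then b1 else (if j = 2 then b2 else b3)))" for u
  have VH: "verts {1,2} {1,2,3} = {A 1, A 2, B 1, B 2, B 3}" unfolding verts_def by auto
  have fv: "f (A 1) = a1" "f (A 2) = a2" "f (B 1) = b1" "f (B 2) = b2" "f (B 3) = b3" "f (A (Suc 0)) = a1" "f (B (Suc 0)) = b1" by (simp_all add: f_def)
  show ?thesis unfolding F2_def
  proof (rule pattern_embed[where f = f])
    show "inj_on f (verts {1,2} {1,2,3})" unfolding VH using d by (simp add: fv)
    show "f ` verts {1,2} {1,2,3} \<subseteq> V" unfolding VH using V by (simp add: fv)
    show "\<forall>u\<in>verts {1,2} {1,2,3}. \<forall>v\<in>verts {1,2} {1,2,3}. ({f u, f v} \<in> E) = ({u, v} \<in> complete_edges {1,2} {1,2,3})"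
      unfolding VH using SA SB e  by (simp add: fv mem_complete_edges insert_commute ed_def doubleton_eq_iff)
    show "\<forall>u\<in>verts {1,2} {1,2,3}. \<forall>v\<in>verts {1,2} {1,2,3}. {u, v} \<in> {ed 1 1, ed 1 2, ed 2 2, ed 2 3} \<longrightarrow> {f u, f v} \<in> N"
      unfolding VH using n by (simp add: fv ed_def doubleton_eq_iff mem_complete_edges) (simp add: insert_commute)
    show "N \<subseteq> E" by fact
    show "{ed 1 1, ed 1 2, ed 2 2, ed 2 3} \<subseteq> complete_edges {1,2} {1,2,3}" by (simp add: ed_def mem_complete_edges doubleton_eq_iff)
    show "\<forall>e\<in>complete_edges {1,2} {1,2,3}. \<exists>u\<in>verts {1,2} {1,2,3}. \<exists>v\<in>verts {1,2} {1,2,3}. e = {u, v}"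
      unfolding complete_edges_def verts_def ed_def by blast
  qed
qed

lemma F3_found:
  assumes d: "distinct [a1,a2,b1,b2,b3,b4]"
    and V: "a1 \<in> V" "a2 \<in> V" "b1 \<in> V" "b2 \<in> V" "b3 \<in> V" "b4 \<in> V"
    and SA: "\<forall>x\<in>{a1,a2}. \<forall>y\<in>{a1,a2}. {x,y} \<notin> E"
    and SB: "\<forall>x\<in>{b1,b2,b3,b4}. \<forall>y\<in>{b1,b2,b3,b4}. {x,y} \<notin> E"
    and e: "{a1,b1} \<in> E" "{a1,b2} \<in> E" "{a1,b3} \<in> E" "{a1,b4} \<in> E" "{a2,b1} \<in> E" "{a2,b2} \<in> E" "{a2,b3} \<in> E" "{a2,b4} \<in> E"
    and n: "{a1,b1} \<in> N" "{a1,b2} \<in> N" "{a2,b3} \<in> N" "{a2,b4} \<in> N"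
    and NE: "N \<subseteq> E"
  shows "\<exists>H\<in>F3. contains_induced V E N H"
proof -
  define f where "f u = (case u of A i \<Rightarrow> (if i = 1 then a1 else a2) | B j \<Rightarrow> (if j = 1 then b1 else (if j = 2 then b2 else (if j = 3 then b3 else b4))))" for u
  have VH: "verts {1,2} {1,2,3,4} = {A 1, A 2, B 1, B 2, B 3, B 4}" unfolding verts_def by auto
  have fv: "f (A 1) = a1" "f (A 2) = a2" "f (B 1) = b1" "f (B 2) = b2" "f (B 3) = b3" "f (B 4) = b4" "f (A (Suc 0)) = a1" "f (B (Suc 0)) = b1" by (simp_all add: f_def)
  show ?thesis unfolding F3_def
  proof (rule pattern_embed[where f = f])
    show "inj_on f (verts {1,2} {1,2,3,4})" unfolding VH using d by (simp add: fv)
    show "f ` verts {1,2} {1,2,3,4} \<subseteq> V" unfolding VH using V by (simp add: fv)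
    show "\<forall>u\<in>verts {1,2} {1,2,3,4}. \<forall>v\<in>verts {1,2} {1,2,3,4}. ({f u, f v} \<in> E) = ({u, v} \<in> complete_edges {1,2} {1,2,3,4})"
      unfolding VH using SA SB e  by (simp add: fv mem_complete_edges insert_commute ed_def doubleton_eq_iff)
    show "\<forall>u\<in>verts {1,2} {1,2,3,4}. \<forall>v\<in>verts {1,2} {1,2,3,4}. {u, v} \<in> {ed 1 1, ed 1 2, ed 2 3, ed 2 4} \<longrightarrow> {f u, f v} \<in> N"
      unfolding VH using n by (simp add: fv ed_def doubleton_eq_iff mem_complete_edges) (simp add: insert_commute)
    show "N \<subseteq> E" by fact
    show "{ed 1 1, ed 1 2, ed 2 3, ed 2 4} \<subseteq> complete_edges {1,2} {1,2,3,4}" by (simp add: ed_def mem_complete_edges doubleton_eq_iff)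
    show "\<forall>e\<in>complete_edges {1,2} {1,2,3,4}. \<exists>u\<in>verts {1,2} {1,2,3,4}. \<exists>v\<in>verts {1,2} {1,2,3,4}. e = {u, v}"
      unfolding complete_edges_def verts_def ed_def by blast
  qed
qed

lemma F4_found:
  assumes d: "distinct [a1,a2,a3,b1,b2,b3]"
    and V: "a1 \<in> V" "a2 \<in> V" "a3 \<in> V" "b1 \<in> V" "b2 \<in> V" "b3 \<in> V"
    and SA: "\<forall>x\<in>{a1,a2,a3}. \<forall>y\<in>{a1,a2,a3}. {x,y} \<notin> E"
    and SB: "\<forall>x\<in>{b1,b2,b3}. \<forall>y\<in>{b1,b2,b3}. {x,y} \<notin> E"
    and e: "{a1,b1} \<in> E" "{a1,b2} \<in> E" "{a1,b3} \<in> E" "{a2,b1} \<in> E" "{a2,b2} \<in> E" "{a2,b3} \<in> E" "{a3,b1} \<in> E" "{a3,b2} \<in> E" "{a3,b3} \<in> E"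
    and n: "{a1,b1} \<in> N" "{a2,b2} \<in> N" "{a3,b3} \<in> N"
    and NE: "N \<subseteq> E"
  shows "\<exists>H\<in>F4. contains_induced V E N H"
proof -
  define f where "f u = (case u of A i \<Rightarrow> (if i = 1 then a1 else (if i = 2 then a2 else a3)) | B j \<Rightarrow> (if j = 1 then b1 else (if j = 2 then b2 else b3)))" for u
  have VH: "verts {1,2,3} {1,2,3} = {A 1, A 2, A 3, B 1, B 2, B 3}" unfolding verts_def by auto
  have fv: "f (A 1) = a1" "f (A 2) = a2" "f (A 3) = a3" "f (B 1) = b1" "f (B 2) = b2" "f (B 3) = b3" "f (A (Suc 0)) = a1" "f (B (Suc 0)) = b1" by (simp_all add: f_def)
  show ?thesis unfolding F4_def
  proof (rule pattern_embed[where f = f])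
    show "inj_on f (verts {1,2,3} {1,2,3})" unfolding VH using d by (simp add: fv)
    show "f ` verts {1,2,3} {1,2,3} \<subseteq> V" unfolding VH using V by (simp add: fv)
    show "\<forall>u\<in>verts {1,2,3} {1,2,3}. \<forall>v\<in>verts {1,2,3} {1,2,3}. ({f u, f v} \<in> E) = ({u, v} \<in> complete_edges {1,2,3} {1,2,3})"
      unfolding VH using SA SB e  by (simp add: fv mem_complete_edges insert_commute ed_def doubleton_eq_iff)
    show "\<forall>u\<in>verts {1,2,3} {1,2,3}. \<forall>v\<in>verts {1,2,3} {1,2,3}. {u, v} \<in> {ed 1 1, ed 2 2, ed 3 3} \<longrightarrow> {f u, f v} \<in> N"
      unfolding VH using n by (simp add: fv ed_def doubleton_eq_iff mem_complete_edges) (simp add: insert_commute)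
    show "N \<subseteq> E" by fact
    show "{ed 1 1, ed 2 2, ed 3 3} \<subseteq> complete_edges {1,2,3} {1,2,3}" by (simp add: ed_def mem_complete_edges doubleton_eq_iff)
    show "\<forall>e\<in>complete_edges {1,2,3} {1,2,3}. \<exists>u\<in>verts {1,2,3} {1,2,3}. \<exists>v\<in>verts {1,2,3} {1,2,3}. e = {u, v}"
      unfolding complete_edges_def verts_def ed_def by blast
  qed
qed

lemma F5_found:
  assumes d: "distinct [a1,a2,a3,b1,b2,b3]"
    and V: "a1 \<in> V" "a2 \<in> V" "a3 \<in> V" "b1 \<in> V" "b2 \<in> V" "b3 \<in> V"
    and SA: "\<forall>x\<in>{a1,a2,a3}. \<forall>y\<in>{a1,a2,a3}. {x,y} \<notin> E"
    and SB: "\<forall>x\<in>{b1,b2,b3}. \<forall>y\<in>{b1,b2,b3}. {x,y} \<notin> E"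
    and e: "{a1,b1} \<in> E" "{a1,b2} \<in> E" "{a2,b1} \<in> E" "{a2,b2} \<in> E" "{a2,b3} \<in> E" "{a3,b1} \<in> E" "{a3,b2} \<in> E" "{a3,b3} \<in> E"
    and ne: "{a1,b3} \<notin> E"
    and n: "{a2,b1} \<in> N" "{a3,b2} \<in> N"
    and NE: "N \<subseteq> E"
  shows "\<exists>H\<in>F5. contains_induced V E N H"
proof -
  define f where "f u = (case u of A i \<Rightarrow> (if i = 1 then a1 else (if i = 2 then a2 else a3)) | B j \<Rightarrow> (if j = 1 then b1 else (if j = 2 then b2 else b3)))" for u
  have VH: "verts {1,2,3} {1,2,3} = {A 1, A 2, A 3, B 1, B 2, B 3}" unfolding verts_def by auto
  have fv: "f (A 1) = a1" "f (A 2) = a2" "f (A 3) = a3" "f (B 1) = b1" "f (B 2) = b2" "f (B 3) = b3" "f (A (Suc 0)) = a1" "f (B (Suc 0)) = b1" by (simp_all add: f_def)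
  show ?thesis unfolding F5_def
  proof (rule pattern_embed[where f = f])
    show "inj_on f (verts {1,2,3} {1,2,3})" unfolding VH using d by (simp add: fv)
    show "f ` verts {1,2,3} {1,2,3} \<subseteq> V" unfolding VH using V by (simp add: fv)
    show "\<forall>u\<in>verts {1,2,3} {1,2,3}. \<forall>v\<in>verts {1,2,3} {1,2,3}. ({f u, f v} \<in> E) = ({u, v} \<in> complete_edges {1,2,3} {1,2,3} - {ed 1 3})"
      unfolding VH using SA SB e ne by (simp add: fv mem_complete_edges insert_commute ed_def doubleton_eq_iff)
    show "\<forall>u\<in>verts {1,2,3} {1,2,3}. \<forall>v\<in>verts {1,2,3} {1,2,3}. {u, v} \<in> {ed 2 1, ed 3 2} \<longrightarrow> {f u, f v} \<in> N"
      unfolding VH using n by (simp add: fv ed_def doubleton_eq_iff mem_complete_edges) (simp add: insert_commute)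
    show "N \<subseteq> E" by fact
    show "{ed 2 1, ed 3 2} \<subseteq> complete_edges {1,2,3} {1,2,3} - {ed 1 3}" by (simp add: ed_def mem_complete_edges doubleton_eq_iff)
    show "\<forall>e\<in>complete_edges {1,2,3} {1,2,3} - {ed 1 3}. \<exists>u\<in>verts {1,2,3} {1,2,3}. \<exists>v\<in>verts {1,2,3} {1,2,3}. e = {u, v}"
      unfolding complete_edges_def verts_def ed_def by blast
  qed
qed

lemma F6_found:
  assumes d: "distinct [a1,a2,a3,a4,b1,b2,b3,b4]"
    and V: "a1 \<in> V" "a2 \<in> V" "a3 \<in> V" "a4 \<in> V" "b1 \<in> V" "b2 \<in> V" "b3 \<in> V" "b4 \<in> V"
    and SA: "\<forall>x\<in>{a1,a2,a3,a4}. \<forall>y\<in>{a1,a2,a3,a4}. {x,y} \<notin> E"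
    and SB: "\<forall>x\<in>{b1,b2,b3,b4}. \<forall>y\<in>{b1,b2,b3,b4}. {x,y} \<notin> E"
    and e: "{a1,b1} \<in> E" "{a1,b2} \<in> E" "{a2,b1} \<in> E" "{a2,b2} \<in> E" "{a3,b1} \<in> E" "{a3,b2} \<in> E" "{a3,b3} \<in> E" "{a3,b4} \<in> E" "{a4,b1} \<in> E" "{a4,b2} \<in> E" "{a4,b3} \<in> E" "{a4,b4} \<in> E"
    and ne: "{a1,b3} \<notin> E" "{a1,b4} \<notin> E" "{a2,b3} \<notin> E" "{a2,b4} \<notin> E"
    and n: "{a1,b1} \<in> N" "{a2,b1} \<in> N" "{a3,b2} \<in> N" "{a4,b3} \<in> N" "{a4,b4} \<in> N"
    and NE: "N \<subseteq> E"
  shows "\<exists>H\<in>F6. contains_induced V E N H"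
proof -
  define f where "f u = (case u of A i \<Rightarrow> (if i = 1 then a1 else (if i = 2 then a2 else (if i = 3 then a3 else a4))) | B j \<Rightarrow> (if j = 1 then b1 else (if j = 2 then b2 else (if j = 3 then b3 else b4))))" for u
  have VH: "verts {1,2,3,4} {1,2,3,4} = {A 1, A 2, A 3, A 4, B 1, B 2, B 3, B 4}" unfolding verts_def by auto
  have fv: "f (A 1) = a1" "f (A 2) = a2" "f (A 3) = a3" "f (A 4) = a4" "f (B 1) = b1" "f (B 2) = b2" "f (B 3) = b3" "f (B 4) = b4" "f (A (Suc 0)) = a1" "f (B (Suc 0)) = b1" by (simp_all add: f_def)
  show ?thesis unfolding F6_def
  proof (rule pattern_embed[where f = f])
    show "inj_on f (verts {1,2,3,4} {1,2,3,4})" unfolding VH using d by (simp add: fv)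
    show "f ` verts {1,2,3,4} {1,2,3,4} \<subseteq> V" unfolding VH using V by (simp add: fv)
    show "\<forall>u\<in>verts {1,2,3,4} {1,2,3,4}. \<forall>v\<in>verts {1,2,3,4} {1,2,3,4}. ({f u, f v} \<in> E) = ({u, v} \<in> complete_edges {1,2} {1,2} \<union> complete_edges {3,4} {1,2,3,4})"
      unfolding VH using SA SB e ne by (simp add: fv mem_complete_edges insert_commute ed_def doubleton_eq_iff)
    show "\<forall>u\<in>verts {1,2,3,4} {1,2,3,4}. \<forall>v\<in>verts {1,2,3,4} {1,2,3,4}. {u, v} \<in> {ed 1 1, ed 2 1, ed 3 2, ed 4 3, ed 4 4} \<longrightarrow> {f u, f v} \<in> N"
      unfolding VH using n by (simp add: fv ed_def doubleton_eq_iff mem_complete_edges) (simp add: insert_commute)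
    show "N \<subseteq> E" by fact
    show "{ed 1 1, ed 2 1, ed 3 2, ed 4 3, ed 4 4} \<subseteq> complete_edges {1,2} {1,2} \<union> complete_edges {3,4} {1,2,3,4}" by (simp add: ed_def mem_complete_edges doubleton_eq_iff)
    show "\<forall>e\<in>complete_edges {1,2} {1,2} \<union> complete_edges {3,4} {1,2,3,4}. \<exists>u\<in>verts {1,2,3,4} {1,2,3,4}. \<exists>v\<in>verts {1,2,3,4} {1,2,3,4}. e = {u, v}"
      unfolding complete_edges_def verts_def ed_def by blast
  qed
qed

definition Ffree where
  "Ffree V E N \<longleftrightarrow> (\<forall>H \<in> F1 \<union> F2 \<union> F3 \<union> F4 \<union> F5 \<union> F6. \<not> contains_induced V E N H)"

lemma sb_edge: "signed_bigraph X Y E N \<Longrightarrow> e \<in> E \<Longrightarrow> \<exists>x y. x \<in> X \<and> y \<in> Y \<and> e = {x, y}"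
  unfolding signed_bigraph_def by blast
lemma sb_disj: "signed_bigraph X Y E N \<Longrightarrow> X \<inter> Y = {}"
  unfolding signed_bigraph_def by blast
lemma sb_edge_iff: assumes G: "signed_bigraph X Y E N" and "{u, w} \<in> E"
  shows "(u \<in> X \<and> w \<in> Y) \<or> (u \<in> Y \<and> w \<in> X)"
proof -
  obtain x y where "x \<in> X" "y \<in> Y" "{u, w} = {x, y}" using sb_edge[OF G assms(2)] by blast
  thus ?thesis by (auto simp: doubleton_eq_iff)
qed
lemma sb_same_side: assumes G: "signed_bigraph X Y E N"
  shows "x \<in> X \<Longrightarrow> y \<in> X \<Longrightarrow> {x, y} \<notin> E" "x \<in> Y \<Longrightarrow> y \<in> Y \<Longrightarrow> {x, y} \<notin> E"
  using sb_edge_iff[OF G, of x y] sb_disj[OF G] by blast+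
lemma sb_nosing: assumes G: "signed_bigraph X Y E N" shows "{x} \<notin> E"
  using sb_edge_iff[OF G, of x x] sb_disj[OF G] by auto
lemma sb_finite: "signed_bigraph X Y E N \<Longrightarrow> finite (X \<union> Y)"
  unfolding signed_bigraph_def signed_graph_def by blast
lemma sb_NE: "signed_bigraph X Y E N \<Longrightarrow> N \<subseteq> E"
  unfolding signed_bigraph_def signed_graph_def by blast
lemma sb_sub: "signed_bigraph X Y E N \<Longrightarrow> signed_bigraph X Y (E - D) (N - D)"
  unfolding signed_bigraph_def signed_graph_def by blast
lemma sb_finiteE: assumes G: "signed_bigraph X Y E N" shows "finite E"
proof -
  have "E \<subseteq> Pow (X \<union> Y)"
  proof
    fix e assume "e \<in> E"
    then obtain x y where "x \<in> X" "y \<in> Y" "e = {x, y}" using sb_edge[OF G] by blast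
    thus "e \<in> Pow (X \<union> Y)" by blast
  qed
  thus ?thesis using sb_finite[OF G] by (meson finite_Pow_iff finite_subset)
qed

lemma simp_pair:
  assumes G: "signed_bigraph X Y E N" and e: "{p, q} \<in> E"
    and s: "signed_simplicial X Y E N {p, q}"
    and p': "{p, p'} \<in> E" "p' \<noteq> q" and q': "{q, q'} \<in> E" "q' \<noteq> p"
  shows "{p', q'} \<in> E \<and> {p', q'} \<notin> N"
proof -
  have np: "p' \<noteq> p"
  proof
    assume "p' = p" hence "{p} \<in> E" using p'(1) by simp
    thus False using sb_nosing[OF G] by blast
  qed
  have nq: "q' \<noteq> q"
  proof
    assume "q' = q" hence "{q} \<in> E" using q'(1) by simp
    thus False using sb_nosing[OF G] by blast
  qed
  have "p' \<in> nbr E p" "q' \<in> nbr E q" unfolding nbr_def using p'(1) q'(1) by simp_all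
  hence inS: "p' \<in> edge_nbhd E {p, q}" "q' \<in> edge_nbhd E {p, q}"
    unfolding edge_nbhd_def using np nq p'(2) q'(2) by blast+
  have side: "(p' \<in> X \<and> q' \<in> Y) \<or> (p' \<in> Y \<and> q' \<in> X)"
  proof -
    have d: "X \<inter> Y = {}" by (rule sb_disj[OF G])
    have 1: "(p \<in> X \<and> q \<in> Y) \<or> (p \<in> Y \<and> q \<in> X)" by (rule sb_edge_iff[OF G e])
    have 2: "(p \<in> X \<and> p' \<in> Y) \<or> (p \<in> Y \<and> p' \<in> X)" by (rule sb_edge_iff[OF G p'(1)])
    have 3: "(q \<in> X \<and> q' \<in> Y) \<or> (q \<in> Y \<and> q' \<in> X)" by (rule sb_edge_iff[OF G q'(1)])
    from 1 2 3 d show ?thesis by blast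
  qed
  have pb: "positive_biclique X Y E N (edge_nbhd E {p, q})" using s unfolding signed_simplicial_def .
  have E1: "\<forall>x\<in>edge_nbhd E {p, q} \<inter> X. \<forall>y\<in>edge_nbhd E {p, q} \<inter> Y. {x, y} \<in> E"
    using pb unfolding positive_biclique_def by blast
  have "{p', q'} \<in> E"
  proof (cases "p' \<in> X \<and> q' \<in> Y")
    case True thus ?thesis using E1 inS by blast
  next
    case False
    hence "p' \<in> Y \<and> q' \<in> X" using side by blast
    hence "{q', p'} \<in> E" using E1 inS by blast
    thus ?thesis by (simp add: insert_commute)
  qed
  moreover have "{p', q'} \<notin> N"
  proof -
    have "\<forall>e\<in>E. e \<subseteq> edge_nbhd E {p, q} \<longrightarrow> e \<notin> N" using pb unfolding positive_biclique_def by blast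
    moreover have "{p', q'} \<subseteq> edge_nbhd E {p, q}" using inS by blast
    ultimately show ?thesis using \<open>{p', q'} \<in> E\<close> by blast
  qed
  ultimately show ?thesis by blast
qed

locale SB =
  fixes X Y :: "'v set" and E N :: "'v set set"
  assumes G: "signed_bigraph X Y E N" and ns: "\<not> separable E"
begin

lemma nbr_sub: assumes "r \<in> X" shows "nbr E r \<subseteq> Y"
proof
  fix c assume "c \<in> nbr E r"
  hence "{r, c} \<in> E" unfolding nbr_def by simp
  thus "c \<in> Y" using sb_edge_iff[OF G] sb_disj[OF G] assms by blast
qed

lemma nbr_subY: assumes "c \<in> Y" shows "nbr E c \<subseteq> X"
proof
  fix r assume "r \<in> nbr E c"
  hence "{c, r} \<in> E" unfolding nbr_def by simp
  thus "r \<in> X" using sb_edge_iff[OF G] sb_disj[OF G] assms by blast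
qed

lemma chain: assumes r1: "r1 \<in> X" and r2: "r2 \<in> X"
  shows "nbr E r1 \<subseteq> nbr E r2 \<or> nbr E r2 \<subseteq> nbr E r1"
proof (rule ccontr)
  assume "\<not> ?thesis"
  then obtain c1 c2 where c1: "c1 \<in> nbr E r1" "c1 \<notin> nbr E r2" and c2: "c2 \<in> nbr E r2" "c2 \<notin> nbr E r1"
    by blast
  have Y: "c1 \<in> Y" "c2 \<in> Y" using c1 c2 nbr_sub r1 r2 by blast+
  have d: "X \<inter> Y = {}" by (rule sb_disj[OF G])
  have "r1 \<noteq> r2" using c1 by blast
  moreover have "c1 \<noteq> c2" using c1 c2 by blast
  moreover have "r1 \<noteq> c1" "r1 \<noteq> c2" "r2 \<noteq> c1" "r2 \<noteq> c2" using Y r1 r2 d by blast+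
  ultimately have dis: "distinct [r1, c1, r2, c2]" by auto
  have e: "{r1, c1} \<in> E" "{r2, c2} \<in> E" using c1 c2 unfolding nbr_def by simp_all
  have n1: "{r1, r2} \<notin> E" using sb_same_side(1)[OF G r1 r2] .
  have n2: "{c1, c2} \<notin> E" using sb_same_side(2)[OF G Y] .
  have n3: "{r1, c2} \<notin> E" using c2 unfolding nbr_def by simp
  have n4: "{c1, r2} \<notin> E" using c1 unfolding nbr_def by (simp add: insert_commute)
  have "separable E" unfolding separable_def
    by (rule exI[of _ r1], rule exI[of _ c1], rule exI[of _ r2], rule exI[of _ c2])
       (use dis e n1 n2 n3 n4 in simp)
  thus False using ns by blast
qed

definition NS where "NS = {nbr E r | r. r \<in> X \<and> nbr E r \<noteq> {}}"
definition kk where "kk = card NS"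
definition rk where "rk r = (if nbr E r = {} then Suc kk else card {S\<in>NS. nbr E r \<subseteq> S})"
definition hk where "hk c = card {S\<in>NS. c \<in> S}"

lemma finite_NS: "finite NS"
proof -
  have "NS \<subseteq> Pow Y" unfolding NS_def using nbr_sub by blast
  moreover have "finite Y" using sb_finite[OF G] by simp
  ultimately show ?thesis by (meson finite_Pow_iff finite_subset)
qed

lemma NS_chain: assumes "S \<in> NS" "T \<in> NS" shows "S \<subseteq> T \<or> T \<subseteq> S"
proof -
  obtain r1 where "r1 \<in> X" "S = nbr E r1" using assms(1) unfolding NS_def by blast
  moreover obtain r2 where "r2 \<in> X" "T = nbr E r2" using assms(2) unfolding NS_def by blast
  ultimately show ?thesis using chain by blast
qed

lemma hk_le: "hk c \<le> kk"
  unfolding hk_def kk_def by (rule card_mono[OF finite_NS]) blast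

lemma rk_ge1: assumes "r \<in> X" shows "1 \<le> rk r"
proof (cases "nbr E r = {}")
  case True thus ?thesis unfolding rk_def by simp
next
  case False
  hence "nbr E r \<in> {S\<in>NS. nbr E r \<subseteq> S}" unfolding NS_def using assms by blast
  moreover have "finite {S\<in>NS. nbr E r \<subseteq> S}" using finite_NS by simp
  ultimately have "card {S\<in>NS. nbr E r \<subseteq> S} \<noteq> 0" by (metis card_0_eq empty_iff)
  thus ?thesis unfolding rk_def using False by simp
qed

lemma E_iff: assumes r: "r \<in> X" and c: "c \<in> Y"
  shows "{r, c} \<in> E \<longleftrightarrow> rk r \<le> hk c"
proof
  assume e: "{r, c} \<in> E"
  hence cn: "c \<in> nbr E r" unfolding nbr_def by simp
  hence ne: "nbr E r \<noteq> {}" by blast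
  have "{S\<in>NS. nbr E r \<subseteq> S} \<subseteq> {S\<in>NS. c \<in> S}" using cn by blast
  hence "card {S\<in>NS. nbr E r \<subseteq> S} \<le> card {S\<in>NS. c \<in> S}"
    by (rule card_mono[rotated]) (simp add: finite_NS)
  thus "rk r \<le> hk c" unfolding rk_def hk_def using ne by simp
next
  assume le: "rk r \<le> hk c"
  show "{r, c} \<in> E"
  proof (rule ccontr)
    assume ne: "{r, c} \<notin> E"
    hence cn: "c \<notin> nbr E r" unfolding nbr_def by simp
    show False
    proof (cases "nbr E r = {}")
      case True
      hence "rk r = Suc kk" unfolding rk_def by simp
      thus False using le hk_le[of c] by simp
    next
      case False
      have nin: "nbr E r \<in> NS" unfolding NS_def using r False by blast
      have sub: "{S\<in>NS. c \<in> S} \<subseteq> {S\<in>NS. nbr E r \<subseteq> S} - {nbr E r}"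
      proof
        fix S assume S: "S \<in> {S\<in>NS. c \<in> S}"
        hence "S \<subseteq> nbr E r \<or> nbr E r \<subseteq> S" using NS_chain nin by blast
        thus "S \<in> {S\<in>NS. nbr E r \<subseteq> S} - {nbr E r}" using S cn by blast
      qed
      have fin: "finite ({S\<in>NS. nbr E r \<subseteq> S} - {nbr E r})" using finite_NS by simp
      have "card {S\<in>NS. c \<in> S} \<le> card ({S\<in>NS. nbr E r \<subseteq> S} - {nbr E r})"
        by (rule card_mono[OF fin sub])
      also have "\<dots> = card {S\<in>NS. nbr E r \<subseteq> S} - 1"
        using nin finite_NS by (simp add: card_Diff_singleton)
      finally have "hk c \<le> rk r - 1" unfolding hk_def rk_def using False by simp
      thus False using le rk_ge1[OF r] by simp
    qed
  qed
qed

lemma E_iff': assumes r: "r \<in> X" and c: "c \<in> Y"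
  shows "{c, r} \<in> E \<longleftrightarrow> rk r \<le> hk c"
  using E_iff[OF r c] by (simp add: insert_commute)

lemma rows_all: assumes "1 \<le> i" "i \<le> kk" shows "\<exists>r\<in>X. nbr E r \<noteq> {} \<and> rk r = i"
proof -
  define \<phi> where "\<phi> S = card {T\<in>NS. S \<subseteq> T}" for S
  have inj: "inj_on \<phi> NS"
  proof (rule inj_onI, rule ccontr)
    fix S T assume S: "S \<in> NS" and T: "T \<in> NS" and eq: "\<phi> S = \<phi> T" and ne: "S \<noteq> T"
    have lt: "\<phi> T < \<phi> S" if S: "S \<in> NS" and T: "T \<in> NS" and st: "S \<subset> T" for S T
    proof -
      have "{U\<in>NS. T \<subseteq> U} \<subset> {U\<in>NS. S \<subseteq> U}" using S T st by blast
      hence "card {U\<in>NS. T \<subseteq> U} < card {U\<in>NS. S \<subseteq> U}"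
        by (rule psubset_card_mono[rotated]) (simp add: finite_NS)
      thus ?thesis unfolding \<phi>_def by simp
    qed
    have "S \<subset> T \<or> T \<subset> S" using NS_chain[OF S T] ne by blast
    thus False using lt[OF S T] lt[OF T S] eq by auto
  qed
  have img: "\<phi> ` NS \<subseteq> {1..kk}"
  proof
    fix m assume "m \<in> \<phi> ` NS"
    then obtain S where S: "S \<in> NS" and m: "m = \<phi> S" by blast
    have "S \<in> {T\<in>NS. S \<subseteq> T}" using S by blast
    moreover have "finite {T\<in>NS. S \<subseteq> T}" using finite_NS by simp
    ultimately have "card {T\<in>NS. S \<subseteq> T} \<noteq> 0" by (metis card_0_eq empty_iff)
    moreover have "card {T\<in>NS. S \<subseteq> T} \<le> kk" unfolding kk_def by (rule card_mono[OF finite_NS]) blast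
    ultimately show "m \<in> {1..kk}" unfolding m \<phi>_def by simp
  qed
  have "card (\<phi> ` NS) = kk" unfolding kk_def using card_image[OF inj] .
  hence "\<phi> ` NS = {1..kk}" using img by (simp add: card_subset_eq)
  hence "i \<in> \<phi> ` NS" using assms by simp
  then obtain S where S: "S \<in> NS" and i: "i = \<phi> S" by blast
  then obtain r where r: "r \<in> X" "S = nbr E r" "nbr E r \<noteq> {}" unfolding NS_def by blast
  have "rk r = i" unfolding rk_def i \<phi>_def using r by simp
  thus ?thesis using r by blast
qed

lemma cols_all: assumes "1 \<le> i" "i \<le> kk" shows "\<exists>c\<in>Y. hk c = i"
proof -
  obtain r where r: "r \<in> X" "nbr E r \<noteq> {}" "rk r = i" using rows_all[OF assms] by blast
  have nin: "nbr E r \<in> NS" unfolding NS_def using r by blast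
  define Lw where "Lw = {S\<in>NS. S \<subset> nbr E r}"
  have finLw: "finite Lw" unfolding Lw_def using finite_NS by simp
  have "\<exists>c\<in>nbr E r. \<forall>S\<in>Lw. c \<notin> S"
  proof (cases "Lw = {}")
    case True thus ?thesis using r by blast
  next
    case False
    define m where "m = Max (card ` Lw)"
    have "m \<in> card ` Lw" unfolding m_def using finLw False by simp
    then obtain S0 where S0: "S0 \<in> Lw" "card S0 = m" by blast
    have finS: "finite S" if "S \<in> NS" for S
    proof -
      have "S \<subseteq> Y" using that nbr_sub unfolding NS_def by blast
      thus ?thesis using sb_finite[OF G] finite_subset by blast
    qed
    have all: "S \<subseteq> S0" if S: "S \<in> Lw" for S
    proof (rule ccontr)
      assume "\<not> S \<subseteq> S0"
      hence "S0 \<subset> S" using NS_chain S S0 unfolding Lw_def by blast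
      hence "card S0 < card S" using finS S unfolding Lw_def by (simp add: psubset_card_mono)
      moreover have "card S \<le> m" unfolding m_def using finLw S by simp
      ultimately show False using S0 by simp
    qed
    have "S0 \<subset> nbr E r" using S0 unfolding Lw_def by blast
    then obtain c where "c \<in> nbr E r" "c \<notin> S0" by blast
    thus ?thesis using all by blast
  qed
  then obtain c where c: "c \<in> nbr E r" and cL: "\<forall>S\<in>Lw. c \<notin> S" by blast
  have "{S\<in>NS. c \<in> S} = {S\<in>NS. nbr E r \<subseteq> S}"
  proof (intro equalityI subsetI)
    fix S assume S: "S \<in> {S\<in>NS. c \<in> S}"
    hence "S \<subseteq> nbr E r \<or> nbr E r \<subseteq> S" using NS_chain nin by blast
    moreover have "\<not> S \<subset> nbr E r" using S cL unfolding Lw_def by blast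
    ultimately show "S \<in> {S\<in>NS. nbr E r \<subseteq> S}" using S by blast
  next
    fix S assume "S \<in> {S\<in>NS. nbr E r \<subseteq> S}" thus "S \<in> {S\<in>NS. c \<in> S}" using c by blast
  qed
  hence "hk c = rk r" unfolding hk_def rk_def using r by simp
  moreover have "c \<in> Y" using c nbr_sub r by blast
  ultimately show ?thesis using r by blast
qed

lemma kk_pos: assumes "E \<noteq> {}" shows "1 \<le> kk"
proof -
  obtain e where "e \<in> E" using assms by blast
  then obtain x y where x: "x \<in> X" "y \<in> Y" "e = {x, y}" using sb_edge[OF G] by blast
  hence "y \<in> nbr E x" unfolding nbr_def using \<open>e \<in> E\<close> by simp
  hence "nbr E x \<in> NS" unfolding NS_def using x by blast
  hence "NS \<noteq> {}" by blast
  thus ?thesis unfolding kk_def using finite_NS by (simp add: Suc_leI card_gt_0_iff)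
qed

end

locale SBF = SB +
  assumes F: "Ffree (X \<union> Y) E N"
begin

definition negp where "negp r c \<longleftrightarrow> r \<in> X \<and> c \<in> Y \<and> {r, c} \<in> N"

lemma negpD: assumes "negp r c" shows "r \<in> X" "c \<in> Y" "{r, c} \<in> N" "{r, c} \<in> E"
  using assms sb_NE[OF G] unfolding negp_def by blast+

lemma XYne: "a \<in> X \<Longrightarrow> b \<in> Y \<Longrightarrow> a \<noteq> b"
  using sb_disj[OF G] by blast

lemma sameX: "x \<in> X \<Longrightarrow> y \<in> X \<Longrightarrow> {x, y} \<notin> E" by (rule sb_same_side(1)[OF G])
lemma sameY: "x \<in> Y \<Longrightarrow> y \<in> Y \<Longrightarrow> {x, y} \<notin> E" by (rule sb_same_side(2)[OF G])
lemma NE: "N \<subseteq> E" by (rule sb_NE[OF G])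

lemma allX: "Z \<subseteq> X \<Longrightarrow> \<forall>x\<in>Z. \<forall>y\<in>Z. {x, y} \<notin> E"
  using sameX by blast
lemma allY: "Z \<subseteq> Y \<Longrightarrow> \<forall>x\<in>Z. \<forall>y\<in>Z. {x, y} \<notin> E"
  using sameY by blast

lemma Fcontra:
  "H \<in> F1 \<Longrightarrow> contains_induced (X \<union> Y) E N H \<Longrightarrow> False"
  "H \<in> F2 \<Longrightarrow> contains_induced (X \<union> Y) E N H \<Longrightarrow> False"
  "H \<in> F3 \<Longrightarrow> contains_induced (X \<union> Y) E N H \<Longrightarrow> False"
  "H \<in> F4 \<Longrightarrow> contains_induced (X \<union> Y) E N H \<Longrightarrow> False"
  "H \<in> F5 \<Longrightarrow> contains_induced (X \<union> Y) E N H \<Longrightarrow> False"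
  "H \<in> F6 \<Longrightarrow> contains_induced (X \<union> Y) E N H \<Longrightarrow> False"
  using F unfolding Ffree_def by blast+

lemma noF1:
  assumes n: "negp a1 b1" "negp a1 b2" "negp a2 b1" "negp a2 b2" and d: "a1 \<noteq> a2" "b1 \<noteq> b2"
  shows False
proof -
  note D = negpD[OF n(1)] negpD[OF n(2)] negpD[OF n(3)] negpD[OF n(4)]
  have SA: "\<forall>x\<in>{a1,a2}. \<forall>y\<in>{a1,a2}. {x, y} \<notin> E" by (rule allX) (use D in simp)
  have SB: "\<forall>x\<in>{b1,b2}. \<forall>y\<in>{b1,b2}. {x, y} \<notin> E" by (rule allY) (use D in simp)
  have "\<exists>H\<in>F1. contains_induced (X \<union> Y) E N H"
    by (rule F1_found[of a1 a2 b1 b2]) (use D d SA SB XYne NE in auto)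
  thus False using Fcontra(1) by blast
qed

lemma noF2:
  assumes n: "negp a1 b1" "negp a1 b2" "negp a2 b2" "negp a2 b3" and e: "{a1, b3} \<in> E" "{a2, b1} \<in> E"
    and d: "a1 \<noteq> a2" "b1 \<noteq> b2" "b1 \<noteq> b3" "b2 \<noteq> b3"
  shows False
proof -
  note D = negpD[OF n(1)] negpD[OF n(2)] negpD[OF n(3)] negpD[OF n(4)]
  have SA: "\<forall>x\<in>{a1,a2}. \<forall>y\<in>{a1,a2}. {x, y} \<notin> E" by (rule allX) (use D in simp)
  have SB: "\<forall>x\<in>{b1,b2,b3}. \<forall>y\<in>{b1,b2,b3}. {x, y} \<notin> E" by (rule allY) (use D in simp)
  have "\<exists>H\<in>F2. contains_induced (X \<union> Y) E N H"
    by (rule F2_found[of a1 a2 b1 b2 b3]) (use D d e SA SB XYne NE in auto)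
  thus False using Fcontra(2) by blast
qed

lemma noF2':
  assumes n: "negp b1 a1" "negp b2 a1" "negp b2 a2" "negp b3 a2" and e: "{b3, a1} \<in> E" "{b1, a2} \<in> E"
    and d: "a1 \<noteq> a2" "b1 \<noteq> b2" "b1 \<noteq> b3" "b2 \<noteq> b3"
  shows False
proof -
  note D = negpD[OF n(1)] negpD[OF n(2)] negpD[OF n(3)] negpD[OF n(4)]
  have SA: "\<forall>x\<in>{a1,a2}. \<forall>y\<in>{a1,a2}. {x, y} \<notin> E" by (rule allY) (use D in simp)
  have SB: "\<forall>x\<in>{b1,b2,b3}. \<forall>y\<in>{b1,b2,b3}. {x, y} \<notin> E" by (rule allX) (use D in simp)
  have "\<exists>H\<in>F2. contains_induced (X \<union> Y) E N H"
    by (rule F2_found[of a1 a2 b1 b2 b3]) (use D d e SA SB XYne NE in \<open>auto simp: insert_commute\<close>)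
  thus False using Fcontra(2) by blast
qed

lemma noF3:
  assumes n: "negp a1 b1" "negp a1 b2" "negp a2 b3" "negp a2 b4"
    and e: "{a1, b3} \<in> E" "{a1, b4} \<in> E" "{a2, b1} \<in> E" "{a2, b2} \<in> E"
    and d: "a1 \<noteq> a2" "distinct [b1, b2, b3, b4]"
  shows False
proof -
  note D = negpD[OF n(1)] negpD[OF n(2)] negpD[OF n(3)] negpD[OF n(4)]
  have SA: "\<forall>x\<in>{a1,a2}. \<forall>y\<in>{a1,a2}. {x, y} \<notin> E" by (rule allX) (use D in simp)
  have SB: "\<forall>x\<in>{b1,b2,b3,b4}. \<forall>y\<in>{b1,b2,b3,b4}. {x, y} \<notin> E" by (rule allY) (use D in simp)
  have "\<exists>H\<in>F3. contains_induced (X \<union> Y) E N H"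
    by (rule F3_found[of a1 a2 b1 b2 b3 b4]) (use D d e SA SB XYne NE in auto)
  thus False using Fcontra(3) by blast
qed

lemma noF3':
  assumes n: "negp b1 a1" "negp b2 a1" "negp b3 a2" "negp b4 a2"
    and e: "{b3, a1} \<in> E" "{b4, a1} \<in> E" "{b1, a2} \<in> E" "{b2, a2} \<in> E"
    and d: "a1 \<noteq> a2" "distinct [b1, b2, b3, b4]"
  shows False
proof -
  note D = negpD[OF n(1)] negpD[OF n(2)] negpD[OF n(3)] negpD[OF n(4)]
  have SA: "\<forall>x\<in>{a1,a2}. \<forall>y\<in>{a1,a2}. {x, y} \<notin> E" by (rule allY) (use D in simp)
  have SB: "\<forall>x\<in>{b1,b2,b3,b4}. \<forall>y\<in>{b1,b2,b3,b4}. {x, y} \<notin> E" by (rule allX) (use D in simp)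
  have "\<exists>H\<in>F3. contains_induced (X \<union> Y) E N H"
    by (rule F3_found[of a1 a2 b1 b2 b3 b4]) (use D d e SA SB XYne NE in \<open>auto simp: insert_commute\<close>)
  thus False using Fcontra(3) by blast
qed

lemma noF4:
  assumes n: "negp a1 b1" "negp a2 b2" "negp a3 b3"
    and e: "{a1, b2} \<in> E" "{a1, b3} \<in> E" "{a2, b1} \<in> E" "{a2, b3} \<in> E" "{a3, b1} \<in> E" "{a3, b2} \<in> E"
    and d: "distinct [a1, a2, a3]" "distinct [b1, b2, b3]"
  shows False
proof -
  note D = negpD[OF n(1)] negpD[OF n(2)] negpD[OF n(3)]
  have SA: "\<forall>x\<in>{a1,a2,a3}. \<forall>y\<in>{a1,a2,a3}. {x, y} \<notin> E" by (rule allX) (use D in simp)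
  have SB: "\<forall>x\<in>{b1,b2,b3}. \<forall>y\<in>{b1,b2,b3}. {x, y} \<notin> E" by (rule allY) (use D in simp)
  have "\<exists>H\<in>F4. contains_induced (X \<union> Y) E N H"
    by (rule F4_found[of a1 a2 a3 b1 b2 b3]) (use D d e SA SB XYne NE in auto)
  thus False using Fcontra(4) by blast
qed


lemma block:
  assumes P: "\<And>a b. P a b \<Longrightarrow> negp a b \<and> rk a = i \<and> hk b = i"
    and cov: "\<And>x y. \<exists>a b. P a b \<and> a \<noteq> x \<and> b \<noteq> y"
  shows False
proof -
  have nP: "negp a b" if "P a b" for a b using P[OF that] by blast
  have eP: "{a, b'} \<in> E" if "P a b" "P a' b'" for a b a' b'
  proof -
    have "a \<in> X" "b' \<in> Y" using negpD nP that by blast+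
    moreover have "rk a \<le> hk b'" using P that by simp
    ultimately show ?thesis using E_iff by blast
  qed
  obtain r1 c1 where h1: "P r1 c1" using cov by blast
  obtain r2 c2 where h2: "P r2 c2" "r2 \<noteq> r1" "c2 \<noteq> c1" using cov by blast
  obtain r3 c3 where h3: "P r3 c3" "r3 \<noteq> r1" "c3 \<noteq> c2" using cov by blast
  obtain r4 c4 where h4: "P r4 c4" "r4 \<noteq> r2" "c4 \<noteq> c1" using cov by blast
  note n = nP[OF h1] nP[OF h2(1)] nP[OF h3(1)] nP[OF h4(1)]
  note hh = h1 h2(1) h3(1) h4(1)
  show False
  proof (cases "r3 = r2 \<and> r4 = r1")
    case C3: True
    show False
    proof (cases "c3 = c1")
      case True
      show False
      proof (cases "c4 = c2")
        case True
        show False by (rule noF1[of r1 c1 c2 r2]) (use n C3 \<open>c3 = c1\<close> True h2 in auto)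
      next
        case False
        show False by (rule noF2[of r2 c2 c1 r1 c4, OF n(2) _ n(1) _ eP[OF h2(1) h4(1)] eP[OF h1 h2(1)]])
          (use n C3 \<open>c3 = c1\<close> False h2 h3 h4 in auto)
      qed
    next
      case c31: False
      show False
      proof (cases "c4 = c2")
        case True
        show False by (rule noF2[of r1 c1 c2 r2 c3, OF n(1) _ n(2) _ eP[OF h1 h3(1)] eP[OF h2(1) h1]])
          (use n C3 c31 True h2 h3 h4 in auto)
      next
        case c42: False
        show False
        proof (cases "c3 = c4")
          case True
          show False by (rule noF2[of r1 c1 c3 r2 c2, OF n(1) _ _ n(2) eP[OF h1 h2(1)] eP[OF h2(1) h1]])
            (use n C3 c31 c42 True h2 h3 h4 in auto)
        next
          case False
          show False by (rule noF3[of r1 c1 c4 r2 c2 c3, OF n(1) _ n(2) _ eP[OF h1 h2(1)] eP[OF h1 h3(1)]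
              eP[OF h2(1) h1] eP[OF h2(1) h4(1)]])
            (use n C3 c31 c42 False h2 h3 h4 in auto)
        qed
      qed
    qed
  next
    case notC3: False
    show False
    proof (cases "c3 = c1 \<and> c4 = c2")
      case C4: True
      show False
      proof (cases "r3 = r2")
        case True
        hence r41: "r4 \<noteq> r1" using notC3 by blast
        show False by (rule noF2'[of r1 c1 r2 c2 r4, OF n(1) _ n(2) _ eP[OF h4(1) h1] eP[OF h1 h2(1)]])
          (use n C4 True r41 h2 h3 h4 in auto)
      next
        case r32: False
        show False
        proof (cases "r4 = r1")
          case True
          show False by (rule noF2'[of r2 c2 r1 c1 r3, OF n(2) _ n(1) _ eP[OF h3(1) h2(1)] eP[OF h2(1) h1]])
            (use n C4 True r32 h2 h3 h4 in auto)
        next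
          case r41: False
          show False
          proof (cases "r3 = r4")
            case True
            show False by (rule noF2'[of r1 c1 r3 c2 r2, OF n(1) _ _ n(2) eP[OF h2(1) h1] eP[OF h1 h2(1)]])
              (use n C4 True r32 r41 h2 h3 h4 in auto)
          next
            case False
            show False by (rule noF3'[of r1 c1 r3 r2 c2 r4, OF n(1) _ n(2) _ eP[OF h2(1) h1] eP[OF h4(1) h1]
                eP[OF h1 h2(1)] eP[OF h3(1) h2(1)]])
              (use n C4 r32 r41 False h2 h3 h4 in auto)
          qed
        qed
      qed
    next
      case notC4: False
      show False
      proof (cases "r3 \<noteq> r2 \<and> c3 \<noteq> c1")
        case True
        show False by (rule noF4[of r1 c1 r2 c2 r3 c3, OF n(1) n(2) n(3) eP[OF h1 h2(1)] eP[OF h1 h3(1)]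
            eP[OF h2(1) h1] eP[OF h2(1) h3(1)] eP[OF h3(1) h1] eP[OF h3(1) h2(1)]])
          (use True h2 h3 in auto)
      next
        case nC1: False
        show False
        proof (cases "r4 \<noteq> r1 \<and> c4 \<noteq> c2")
          case True
          show False by (rule noF4[of r1 c1 r2 c2 r4 c4, OF n(1) n(2) n(4) eP[OF h1 h2(1)] eP[OF h1 h4(1)]
              eP[OF h2(1) h1] eP[OF h2(1) h4(1)] eP[OF h4(1) h1] eP[OF h4(1) h2(1)]])
            (use True h2 h4 in auto)
        next
          case nC2: False
          show False
          proof (cases "r3 = r2")
            case True
            hence c4: "c4 = c2" "r4 \<noteq> r1" using nC2 notC3 by blast+
            hence c31: "c3 \<noteq> c1" using notC4 by blast
            show False by (rule noF4[of r1 c1 r3 c3 r4 c4, OF n(1) n(3) n(4) eP[OF h1 h3(1)] eP[OF h1 h4(1)]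
                eP[OF h3(1) h1] eP[OF h3(1) h4(1)] eP[OF h4(1) h1] eP[OF h4(1) h3(1)]])
              (use True c4 c31 h2 h3 h4 in auto)
          next
            case False
            hence c3: "c3 = c1" using nC1 by blast
            hence "r4 = r1" "c4 \<noteq> c2" using nC2 notC4 by blast+
            show False by (rule noF4[of r2 c2 r3 c3 r4 c4, OF n(2) n(3) n(4) eP[OF h2(1) h3(1)] eP[OF h2(1) h4(1)]
                eP[OF h3(1) h2(1)] eP[OF h3(1) h4(1)] eP[OF h4(1) h2(1)] eP[OF h4(1) h3(1)]])
              (use False c3 \<open>r4 = r1\<close> \<open>c4 \<noteq> c2\<close> h2 h3 h4 in auto)
          qed
        qed
      qed
    qed
  qed
qed

end

context SBF
begin

definition cross where "cross t r c \<longleftrightarrow> negp r c \<and> rk r \<le> t \<and> t < hk c"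
definition LOK where "LOK t \<longleftrightarrow> (\<forall>r c r' c'. cross t r c \<longrightarrow> cross t r' c' \<longrightarrow> c = c' \<and> hk c = Suc t)"
definition ROK where "ROK t \<longleftrightarrow> (\<forall>r c r' c'. cross t r c \<longrightarrow> cross t r' c' \<longrightarrow> r = r' \<and> rk r = t)"
definition Pend where "Pend t \<longleftrightarrow> (\<forall>r c. cross t r c \<longrightarrow> (\<forall>r' c'. cross t r' c' \<longrightarrow> r' = r \<and> c' = c) \<longrightarrow>
   (\<exists>p q1 q2. negp p q1 \<and> negp p q2 \<and> q1 \<noteq> q2 \<and> p \<noteq> r \<and> rk r \<le> rk p \<and> rk p = hk q1 \<and> rk p = hk q2 \<and> rk p \<le> t))"
definition Valid where "Valid i \<longleftrightarrow> (\<exists>x\<in>X. \<exists>y\<in>Y. rk x = i \<and> hk y = i \<and>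
   (\<forall>r c. negp r c \<longrightarrow> rk r \<le> i \<longrightarrow> i \<le> hk c \<longrightarrow> r = x \<or> c = y))"

lemma edge_rk: "a \<in> X \<Longrightarrow> b \<in> Y \<Longrightarrow> rk a \<le> hk b \<Longrightarrow> {a, b} \<in> E"
  using E_iff by blast
lemma nedge_rk: "a \<in> X \<Longrightarrow> b \<in> Y \<Longrightarrow> hk b < rk a \<Longrightarrow> {a, b} \<notin> E"
  using E_iff by fastforce

lemma negp_rk: "negp a b \<Longrightarrow> rk a \<le> hk b"
  using negpD E_iff by blast

lemma noF5c:
  assumes c1: "cross t a1 b1" and c2: "cross t a2 b2" and d: "a1 \<noteq> a2" "b1 \<noteq> b2"
  shows False
proof -
  have n1: "negp a1 b1" and r1: "rk a1 \<le> t" and h1: "t < hk b1" using c1 unfolding cross_def by auto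
  have n2: "negp a2 b2" and r2: "rk a2 \<le> t" and h2: "t < hk b2" using c2 unfolding cross_def by auto
  note D = negpD[OF n1] negpD[OF n2]
  have t1: "1 \<le> t" using rk_ge1 D r1 by fastforce
  have tk: "Suc t \<le> kk" using hk_le[of b1] h1 by simp
  obtain z where z: "z \<in> X" "rk z = Suc t" using rows_all[of "Suc t"] tk by auto
  obtain w where w: "w \<in> Y" "hk w = t" using cols_all[of t] t1 tk by auto
  have SA: "\<forall>x\<in>{z,a1,a2}. \<forall>y\<in>{z,a1,a2}. {x, y} \<notin> E" by (rule allX) (use D z in simp)
  have SB: "\<forall>x\<in>{b1,b2,w}. \<forall>y\<in>{b1,b2,w}. {x, y} \<notin> E" by (rule allY) (use D w in simp)
  have nzw: "{z, w} \<notin> E" by (rule nedge_rk) (use z w in auto)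
  have "\<exists>H\<in>F5. contains_induced (X \<union> Y) E N H"
  proof (rule F5_found[of z a1 a2 b1 b2 w, OF _ _ _ _ _ _ _ SA SB])
    show "distinct [z, a1, a2, b1, b2, w]" using z w D d r1 r2 h1 h2 XYne by auto
  qed (use D z w r1 r2 h1 h2 NE nzw in \<open>auto intro!: edge_rk\<close>)
  thus False using Fcontra(5) by blast
qed

lemma star: "cross t a1 b1 \<Longrightarrow> cross t a2 b2 \<Longrightarrow> a1 = a2 \<or> b1 = b2"
  using noF5c by blast

lemma noF6r:
  assumes p1: "negp p1 q" and p2: "negp p2 q" and p12: "p1 \<noteq> p2" and rp1: "rk p1 = i" and rp2: "rk p2 = i"
    and hq: "hk q = i" and ry: "negp r y0" and hy: "hk y0 = i" and rr: "rk r < i" and qy: "q \<noteq> y0"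
    and pq1: "negp p q1" and pq2: "negp p q2" and q12: "q1 \<noteq> q2" and pr: "p \<noteq> r" and rrp: "rk r \<le> rk p"
    and h1: "rk p = hk q1" and h2: "rk p = hk q2" and rpi: "rk p < i"
  shows False
proof -
  note D = negpD[OF p1] negpD[OF p2] negpD[OF ry] negpD[OF pq1] negpD[OF pq2]
  have SA: "\<forall>x\<in>{p1,p2,r,p}. \<forall>y\<in>{p1,p2,r,p}. {x, y} \<notin> E" by (rule allX) (use D in simp)
  have SB: "\<forall>x\<in>{q,y0,q1,q2}. \<forall>y\<in>{q,y0,q1,q2}. {x, y} \<notin> E" by (rule allY) (use D in simp)
  have ne: "{p1, q1} \<notin> E" "{p1, q2} \<notin> E" "{p2, q1} \<notin> E" "{p2, q2} \<notin> E"
    by (rule nedge_rk; use D rp1 rp2 h1 h2 rpi in auto)+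
  have "\<exists>H\<in>F6. contains_induced (X \<union> Y) E N H"
  proof (rule F6_found[of p1 p2 r p q y0 q1 q2, OF _ _ _ _ _ _ _ _ _ SA SB])
    show "distinct [p1, p2, r, p, q, y0, q1, q2]" using D p12 rp1 rp2 hq hy rr qy q12 pr h1 h2 rpi XYne by auto
  qed (use D rp1 rp2 hq hy rr rrp h1 h2 rpi NE ne in \<open>auto intro!: edge_rk\<close>)
  thus False using Fcontra(6) by blast
qed

lemma valid_simp:
  assumes V: "Valid i"
  shows "\<exists>e\<in>E. signed_simplicial X Y E N e"
proof -
  obtain x y where x: "x \<in> X" and y: "y \<in> Y" and rx: "rk x = i" and hy: "hk y = i"
    and cov: "\<forall>r c. negp r c \<longrightarrow> rk r \<le> i \<longrightarrow> i \<le> hk c \<longrightarrow> r = x \<or> c = y"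
    using V unfolding Valid_def by blast
  have exy: "{x, y} \<in> E" using edge_rk x y rx hy by simp
  define S where "S = edge_nbhd E {x, y}"
  have SX: "a \<in> X \<and> a \<noteq> x \<and> rk a \<le> i" if "a \<in> S" "a \<in> X" for a
  proof -
    have "a \<in> nbr E x \<or> a \<in> nbr E y" "a \<noteq> x" "a \<noteq> y" using that unfolding S_def edge_nbhd_def by auto
    moreover have "a \<notin> nbr E x" using nbr_sub[OF x] that XYne by blast
    ultimately have "{y, a} \<in> E" unfolding nbr_def by auto
    hence "rk a \<le> hk y" using E_iff' that(2) y by blast
    thus ?thesis using that \<open>a \<noteq> x\<close> hy by simp
  qed
  have SY: "b \<in> Y \<and> b \<noteq> y \<and> i \<le> hk b" if "b \<in> S" "b \<in> Y" for b
  proof -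
    have "b \<in> nbr E x \<or> b \<in> nbr E y" "b \<noteq> x" "b \<noteq> y" using that unfolding S_def edge_nbhd_def by auto
    moreover have "b \<notin> nbr E y" using nbr_subY[OF y] that XYne by blast
    ultimately have "{x, b} \<in> E" unfolding nbr_def by auto
    hence "rk x \<le> hk b" using E_iff that(2) x by blast
    thus ?thesis using that \<open>b \<noteq> y\<close> rx by simp
  qed
  have "positive_biclique X Y E N S" unfolding positive_biclique_def
  proof (intro conjI ballI impI)
    fix a b assume a: "a \<in> S \<inter> X" and b: "b \<in> S \<inter> Y"
    show "{a, b} \<in> E" using SX[of a] SY[of b] a b by (intro edge_rk) auto
  next
    fix e assume e: "e \<in> E" and eS: "e \<subseteq> S"
    obtain a b where ab: "a \<in> X" "b \<in> Y" "e = {a, b}" using sb_edge[OF G e] by blast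
    have "a \<in> S" "b \<in> S" using eS ab by auto
    hence sa: "a \<noteq> x" "rk a \<le> i" and sb: "b \<noteq> y" "i \<le> hk b" using SX SY ab by auto
    show "e \<notin> N"
    proof
      assume "e \<in> N"
      hence "negp a b" unfolding negp_def using ab by simp
      thus False using cov sa sb by blast
    qed
  qed
  thus ?thesis using exy unfolding signed_simplicial_def S_def by blast
qed

end

context SBF
begin

lemma crossD: assumes "cross t r c"
  shows "negp r c" "rk r \<le> t" "t < hk c" "r \<in> X" "c \<in> Y"
  using assms negpD unfolding cross_def by auto

lemma sweep:
  assumes "s < kk" "LOK s" "Pend s"
  shows "\<exists>i. s < i \<and> i \<le> kk \<and> Valid i"
  using assms
proof (induction "kk - s" arbitrary: s rule: less_induct)
  case less
  have IH: "\<exists>i. t < i \<and> i \<le> kk \<and> Valid i" if "s < t" "t < kk" "LOK t" "Pend t" for t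
    using less.hyps[of t] that less.prems by simp
  have sk: "s < kk" and LOKs0: "LOK s" and Pends: "Pend s" using less.prems by auto
  have LOKs: "c = c' \<and> hk c = Suc s" if "cross s r c" "cross s r' c'" for r c r' c'
    using LOKs0 that unfolding LOK_def by blast
  have L1: "cross s r c \<or> cross (Suc s) r c \<or> (rk r = Suc s \<and> hk c = Suc s)"
    if "negp r c" "rk r \<le> Suc s" "Suc s \<le> hk c" for r c
    using that unfolding cross_def by auto
  obtain x1 where x1: "x1 \<in> X" "rk x1 = Suc s" using rows_all[of "Suc s"] sk by auto
  obtain y1 where y1: "y1 \<in> Y" "hk y1 = Suc s" using cols_all[of "Suc s"] sk by auto
  show ?case
  proof (cases "Valid (Suc s)")
    case True thus ?thesis using sk by (intro exI[of _ "Suc s"]) simp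
  next
    case nV: False
    have nVx: "\<exists>r c. negp r c \<and> rk r \<le> Suc s \<and> Suc s \<le> hk c \<and> r \<noteq> x \<and> c \<noteq> y"
      if "x \<in> X" "y \<in> Y" "rk x = Suc s" "hk y = Suc s" for x y
      using nV that unfolding Valid_def by blast
    show ?thesis
    proof (cases "ROK (Suc s)")
      case ROK: True
      have ROKi: "r = r' \<and> rk r = Suc s" if "cross (Suc s) r c" "cross (Suc s) r' c'" for r c r' c'
        using ROK that unfolding ROK_def by blast
      show ?thesis
      proof (cases "\<exists>r c. cross s r c")
        case exS: True
        then obtain r y0 where ry0: "cross s r y0" by blast
        have hy0: "hk y0 = Suc s" using LOKs[OF ry0 ry0] by simp
        show ?thesis
        proof (cases "\<exists>r c. cross (Suc s) r c")
          case True
          then obtain x0 c where x0c: "cross (Suc s) x0 c" by blast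
          have rx0: "rk x0 = Suc s" using ROKi[OF x0c x0c] by simp
          have "Valid (Suc s)" unfolding Valid_def
          proof (intro bexI conjI allI impI)
            show "x0 \<in> X" "y0 \<in> Y" using crossD x0c ry0 by auto
            show "rk x0 = Suc s" "hk y0 = Suc s" by fact+
            fix a b assume ab: "negp a b" "rk a \<le> Suc s" "Suc s \<le> hk b"
            from L1[OF ab] show "a = x0 \<or> b = y0"
            proof (elim disjE)
              assume "cross s a b" thus ?thesis using LOKs[OF _ ry0] by blast
            next
              assume "cross (Suc s) a b" thus ?thesis using ROKi[OF _ x0c] by blast
            next
              assume pt: "rk a = Suc s \<and> hk b = Suc s"
              show ?thesis
              proof (rule ccontr)
                assume nn: "\<not> (a = x0 \<or> b = y0)"
                note C = crossD[OF ry0] crossD[OF x0c] negpD[OF ab(1)]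
                show False
                  by (rule noF4[of r y0 x0 c a b]) (use C pt nn rx0 hy0 ab in \<open>auto intro!: edge_rk\<close>)
              qed
            qed
          qed
          thus ?thesis using nV by blast
        next
          case noI: False
          have ry: "r \<in> X" "y0 \<in> Y" using crossD[OF ry0] by auto
          obtain p1 q where pq: "negp p1 q" "rk p1 \<le> Suc s" "Suc s \<le> hk q" "p1 \<noteq> x1" "q \<noteq> y0"
            using nVx[OF x1(1) ry(2) x1(2) hy0] by blast
          have ptq: "rk p1 = Suc s" "hk q = Suc s"
            using L1[OF pq(1-3)] LOKs[OF _ ry0, of p1 q] pq(5) noI by blast+
          obtain p2 q' where pq': "negp p2 q'" "rk p2 \<le> Suc s" "Suc s \<le> hk q'" "p2 \<noteq> p1" "q' \<noteq> y0"
            using nVx[OF _ ry(2) ptq(1) hy0] negpD[OF pq(1)] by blast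
          have ptq': "rk p2 = Suc s" "hk q' = Suc s"
            using L1[OF pq'(1-3)] LOKs[OF _ ry0, of p2 q'] pq'(5) noI by blast+
          note C = crossD[OF ry0] negpD[OF pq(1)] negpD[OF pq'(1)]
          have qq: "q' = q"
          proof (rule ccontr)
            assume "q' \<noteq> q"
            show False
              by (rule noF4[of r y0 p1 q p2 q']) (use C ptq ptq' pq pq' hy0 \<open>q' \<noteq> q\<close> in \<open>auto intro!: edge_rk\<close>)
          qed
          have single: "r' = r \<and> c' = y0" if "cross s r' c'" for r' c'
          proof -
            have c': "c' = y0" using LOKs[OF that ry0] by blast
            have "r' = r"
            proof (rule ccontr)
              assume "r' \<noteq> r"
              note C' = crossD[OF that]
              show False
                by (rule noF3'[of r y0 r' p1 q p2]) (use C C' c' ptq ptq' qq pq pq' hy0 \<open>r' \<noteq> r\<close> in \<open>auto intro!: edge_rk\<close>)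
            qed
            thus ?thesis using c' by blast
          qed
          obtain p q1 q2 where P: "negp p q1" "negp p q2" "q1 \<noteq> q2" "p \<noteq> r" "rk r \<le> rk p"
              "rk p = hk q1" "rk p = hk q2" "rk p \<le> s"
            using Pends ry0 single unfolding Pend_def by blast
          show ?thesis
            by (rule FalseE, rule noF6r[of p1 q p2 "Suc s" r y0 p q1 q2])
               (use C ptq ptq' qq pq pq' hy0 P in auto)
        qed
      next
        case noS: False
        show ?thesis
        proof (cases "\<exists>r c. cross (Suc s) r c")
          case True
          then obtain x0 c where x0c: "cross (Suc s) x0 c" by blast
          have rx0: "rk x0 = Suc s" using ROKi[OF x0c x0c] by simp
          have x0X: "x0 \<in> X" using crossD[OF x0c] by simp
          have notI: "p \<noteq> x0 \<Longrightarrow> \<not> cross (Suc s) p q" for p q using ROKi[OF _ x0c] by blast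
          obtain p q1 where pq: "negp p q1" "rk p \<le> Suc s" "Suc s \<le> hk q1" "p \<noteq> x0" "q1 \<noteq> y1"
            using nVx[OF x0X y1(1) rx0 y1(2)] by blast
          have ptq: "rk p = Suc s" "hk q1 = Suc s"
            using L1[OF pq(1-3)] noS notI[OF pq(4)] by blast+
          obtain p' q2 where pq': "negp p' q2" "rk p' \<le> Suc s" "Suc s \<le> hk q2" "p' \<noteq> x0" "q2 \<noteq> q1"
            using nVx[OF x0X _ rx0 ptq(2)] negpD[OF pq(1)] by blast
          have ptq': "rk p' = Suc s" "hk q2 = Suc s"
            using L1[OF pq'(1-3)] noS notI[OF pq'(4)] by blast+
          note C = crossD[OF x0c] negpD[OF pq(1)] negpD[OF pq'(1)]
          have pp: "p' = p"
          proof (rule ccontr)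
            assume "p' \<noteq> p"
            show False
              by (rule noF4[of x0 c p q1 p' q2]) (use C ptq ptq' pq pq' rx0 \<open>p' \<noteq> p\<close> in \<open>auto intro!: edge_rk\<close>)
          qed
          have single: "r' = x0 \<and> c' = c" if "cross (Suc s) r' c'" for r' c'
          proof -
            have r': "r' = x0" using ROKi[OF that x0c] by blast
            have "c' = c"
            proof (rule ccontr)
              assume "c' \<noteq> c"
              note C' = crossD[OF that]
              show False
                by (rule noF3[of x0 c c' p q1 q2]) (use C C' r' ptq ptq' pp pq pq' rx0 \<open>c' \<noteq> c\<close> in \<open>auto intro!: edge_rk\<close>)
            qed
            thus ?thesis using r' by blast
          qed
          define t where "t = hk c - 1"
          have hc: "Suc s < hk c" "hk c \<le> kk" using C hk_le by auto
          hence t: "s < t" "t < kk" "hk c = Suc t" unfolding t_def by auto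
          have x0ct: "cross t x0 c" unfolding cross_def using C rx0 t by auto
          have colc: "b = c" if "cross t a b" for a b
          proof -
            have "a = x0 \<or> b = c" using star[OF that x0ct] .
            moreover have "a = x0 \<Longrightarrow> b = c"
            proof -
              assume "a = x0"
              hence "cross (Suc s) a b" using that rx0 t unfolding cross_def by auto
              thus "b = c" using single by blast
            qed
            ultimately show ?thesis by blast
          qed
          have "LOK t" unfolding LOK_def using colc t by blast
          moreover have "Pend t" unfolding Pend_def
          proof (intro allI impI)
            fix r' c' assume "cross t r' c'" and u: "\<forall>r'' c''. cross t r'' c'' \<longrightarrow> r'' = r' \<and> c'' = c'"
            hence "x0 = r'" using x0ct by blast
            thus "\<exists>p q1 q2. negp p q1 \<and> negp p q2 \<and> q1 \<noteq> q2 \<and> p \<noteq> r' \<and> rk r' \<le> rk p \<and> rk p = hk q1 \<and> rk p = hk q2 \<and> rk p \<le> t"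
              using pq pq' pp ptq ptq' rx0 t by (intro exI[of _ p] exI[of _ q1] exI[of _ q2]) auto
          qed
          ultimately obtain i where "t < i" "i \<le> kk" "Valid i" using IH[OF t(1) t(2)] by blast
          thus ?thesis using t by (intro exI[of _ i]) auto
        next
          case noI: False
          define P where "P a b \<longleftrightarrow> negp a b \<and> rk a = Suc s \<and> hk b = Suc s" for a b
          have False
          proof (rule block[of P "Suc s"])
            show "negp a b \<and> rk a = Suc s \<and> hk b = Suc s" if "P a b" for a b using that unfolding P_def .
            fix x y
            define x' where "x' = (if x \<in> X \<and> rk x = Suc s then x else x1)"
            define y' where "y' = (if y \<in> Y \<and> hk y = Suc s then y else y1)"
            have x': "x' \<in> X" "rk x' = Suc s" unfolding x'_def using x1 by auto
            have y': "y' \<in> Y" "hk y' = Suc s" unfolding y'_def using y1 by auto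
            obtain a b where ab: "negp a b" "rk a \<le> Suc s" "Suc s \<le> hk b" "a \<noteq> x'" "b \<noteq> y'"
              using nVx[OF x'(1) y'(1) x'(2) y'(2)] by blast
            have pt: "rk a = Suc s" "hk b = Suc s" using L1[OF ab(1-3)] noS noI by blast+
            have "a \<noteq> x" using ab(4) pt negpD[OF ab(1)] unfolding x'_def by auto
            moreover have "b \<noteq> y" using ab(5) pt negpD[OF ab(1)] unfolding y'_def by auto
            ultimately show "\<exists>a b. P a b \<and> a \<noteq> x \<and> b \<noteq> y" using ab pt unfolding P_def by blast
          qed
          thus ?thesis by blast
        qed
      qed
    next
      case nROK: False
      obtain r1 c1 r2 c2 where rc1: "cross (Suc s) r1 c1" and rc2: "cross (Suc s) r2 c2"
        and nn: "\<not> (r1 = r2 \<and> rk r1 = Suc s)"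
        using nROK unfolding ROK_def by blast
      have allrk: "rk a = Suc s" if "cross (Suc s) a b" for a b
      proof (rule ccontr)
        assume "rk a \<noteq> Suc s"
        hence "cross s a b" using that unfolding cross_def by auto
        hence "hk b = Suc s" using LOKs by blast
        thus False using that unfolding cross_def by simp
      qed
      have r12: "r1 \<noteq> r2" using nn allrk[OF rc1] by blast
      have ssk: "Suc s < kk" using crossD[OF rc1] hk_le[of c1] by simp
      show ?thesis
      proof (cases "LOK (Suc s)")
        case True
        have "Pend (Suc s)" unfolding Pend_def
        proof (intro allI impI)
          fix r c assume "cross (Suc s) r c" and u: "\<forall>r' c'. cross (Suc s) r' c' \<longrightarrow> r' = r \<and> c' = c"
          hence "r1 = r" "r2 = r" using rc1 rc2 by blast+
          thus "\<exists>p q1 q2. negp p q1 \<and> negp p q2 \<and> q1 \<noteq> q2 \<and> p \<noteq> r \<and> rk r \<le> rk p \<and> rk p = hk q1 \<and> rk p = hk q2 \<and> rk p \<le> Suc s"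
            using r12 by blast
        qed
        then obtain i where "Suc s < i" "i \<le> kk" "Valid i" using IH[of "Suc s"] ssk True by auto
        thus ?thesis by (intro exI[of _ i]) auto
      next
        case nLOK: False
        have c12: "c1 = c2" using star[OF rc1 rc2] r12 by blast
        have allq: "b = c1" if "cross (Suc s) a b" for a b
          using star[OF that rc1] star[OF that rc2] r12 c12 by blast
        obtain a b a' b' where "cross (Suc s) a b" "cross (Suc s) a' b'" "\<not> (b = b' \<and> hk b = Suc (Suc s))"
          using nLOK unfolding LOK_def by blast
        hence hq: "hk c1 \<noteq> Suc (Suc s)" using allq by blast
        have hq2: "Suc s < hk c1" "hk c1 \<le> kk" using crossD[OF rc1] hk_le by auto
        define t where "t = hk c1 - 1"
        have t: "s < t" "t < kk" "hk c1 = Suc t" using hq hq2 unfolding t_def by auto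
        have ct1: "cross t r1 c1" and ct2: "cross t r2 c1"
          using rc1 rc2 c12 allrk[OF rc1] allrk[OF rc2] t unfolding cross_def by auto
        have colq: "b = c1" if "cross t a b" for a b
          using star[OF that ct1] star[OF that ct2] r12 by blast
        have "LOK t" unfolding LOK_def using colq t by blast
        moreover have "Pend t" unfolding Pend_def
        proof (intro allI impI)
          fix r c assume "cross t r c" and u: "\<forall>r' c'. cross t r' c' \<longrightarrow> r' = r \<and> c' = c"
          hence "r1 = r" "r2 = r" using ct1 ct2 by blast+
          thus "\<exists>p q1 q2. negp p q1 \<and> negp p q2 \<and> q1 \<noteq> q2 \<and> p \<noteq> r \<and> rk r \<le> rk p \<and> rk p = hk q1 \<and> rk p = hk q2 \<and> rk p \<le> t"
            using r12 by blast
        qed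
        ultimately obtain i where "t < i" "i \<le> kk" "Valid i" using IH[OF t(1) t(2)] by blast
        thus ?thesis using t by (intro exI[of _ i]) auto
      qed
    qed
  qed
qed

lemma lemmaA_loc:
  assumes ne: "E \<noteq> {}"
  shows "\<exists>e\<in>E. signed_simplicial X Y E N e"
proof -
  have k: "0 < kk" using kk_pos[OF ne] by simp
  have nc: "\<not> cross 0 r c" for r c
  proof
    assume "cross 0 r c"
    hence "rk r \<le> 0" "r \<in> X" using crossD[OF \<open>cross 0 r c\<close>] by auto
    thus False using rk_ge1 by fastforce
  qed
  have "LOK 0" unfolding LOK_def using nc by blast
  moreover have "Pend 0" unfolding Pend_def using nc by blast
  ultimately obtain i where "Valid i" using sweep[OF k] by blast
  thus ?thesis by (rule valid_simp)
qed

end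

lemma tabA1: "\<forall>u0\<in>verts {1,2} {1,2}. \<forall>v0\<in>verts {1,2} {1,2}. {u0,v0} \<in> complete_edges {1,2} {1,2} \<longrightarrow>
  (\<exists>u\<in>verts {1,2} {1,2}. \<exists>v\<in>verts {1,2} {1,2}. {u0,u} \<in> complete_edges {1,2} {1,2} \<and> u \<noteq> v0 \<and>
    {v0,v} \<in> complete_edges {1,2} {1,2} \<and> v \<noteq> u0 \<and> ({u,v} \<notin> complete_edges {1,2} {1,2} \<or> {u,v} \<in> complete_edges {1,2} {1,2}))"
  unfolding verts_def by (simp add: mem_complete_edges ed_def doubleton_eq_iff)

lemma tabB1: "\<forall>u0\<in>verts {1,2} {1,2}. \<forall>v0\<in>verts {1,2} {1,2}. u0 \<noteq> v0 \<longrightarrow> {u0,v0} \<notin> complete_edges {1,2} {1,2} \<longrightarrow>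
  (\<exists>u\<in>verts {1,2} {1,2}. \<exists>v\<in>verts {1,2} {1,2}. {u0,u} \<in> complete_edges {1,2} {1,2} \<and> u \<noteq> v0 \<and>
    {v0,v} \<in> complete_edges {1,2} {1,2} \<and> v \<noteq> u0 \<and> ({u,v} \<notin> complete_edges {1,2} {1,2} \<or> {u,v} \<in> complete_edges {1,2} {1,2}))"
  unfolding verts_def by (simp add: mem_complete_edges ed_def doubleton_eq_iff)

lemma exA1: "\<exists>u\<in>verts {1,2} {1,2}. \<exists>v\<in>verts {1,2} {1,2}. {u,v} \<in> complete_edges {1,2} {1,2}"
  by (rule bexI[of _ "A 1"], rule bexI[of _ "B 1"]) (auto simp: verts_def mem_complete_edges ed_def doubleton_eq_iff)

lemma negsub1: "complete_edges {1,2} {1,2} \<subseteq> complete_edges {1,2} {1,2}" by (simp add: ed_def mem_complete_edges doubleton_eq_iff)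

lemma tabA2: "\<forall>u0\<in>verts {1,2} {1,2,3}. \<forall>v0\<in>verts {1,2} {1,2,3}. {u0,v0} \<in> complete_edges {1,2} {1,2,3} \<longrightarrow>
  (\<exists>u\<in>verts {1,2} {1,2,3}. \<exists>v\<in>verts {1,2} {1,2,3}. {u0,u} \<in> complete_edges {1,2} {1,2,3} \<and> u \<noteq> v0 \<and>
    {v0,v} \<in> complete_edges {1,2} {1,2,3} \<and> v \<noteq> u0 \<and> ({u,v} \<notin> complete_edges {1,2} {1,2,3} \<or> {u,v} \<in> {ed 1 1, ed 1 2, ed 2 2, ed 2 3}))"
  unfolding verts_def by (simp add: mem_complete_edges ed_def doubleton_eq_iff)

lemma tabB2: "\<forall>u0\<in>verts {1,2} {1,2,3}. \<forall>v0\<in>verts {1,2} {1,2,3}. u0 \<noteq> v0 \<longrightarrow> {u0,v0} \<notin> complete_edges {1,2} {1,2,3} \<longrightarrow>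
  (\<exists>u\<in>verts {1,2} {1,2,3}. \<exists>v\<in>verts {1,2} {1,2,3}. {u0,u} \<in> complete_edges {1,2} {1,2,3} \<and> u \<noteq> v0 \<and>
    {v0,v} \<in> complete_edges {1,2} {1,2,3} \<and> v \<noteq> u0 \<and> ({u,v} \<notin> complete_edges {1,2} {1,2,3} \<or> {u,v} \<in> {ed 1 1, ed 1 2, ed 2 2, ed 2 3}))"
  unfolding verts_def by (simp add: mem_complete_edges ed_def doubleton_eq_iff)

lemma exA2: "\<exists>u\<in>verts {1,2} {1,2,3}. \<exists>v\<in>verts {1,2} {1,2,3}. {u,v} \<in> complete_edges {1,2} {1,2,3}"
  by (rule bexI[of _ "A 1"], rule bexI[of _ "B 1"]) (auto simp: verts_def mem_complete_edges ed_def doubleton_eq_iff)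

lemma negsub2: "{ed 1 1, ed 1 2, ed 2 2, ed 2 3} \<subseteq> complete_edges {1,2} {1,2,3}" by (simp add: ed_def mem_complete_edges doubleton_eq_iff)

lemma tabA3: "\<forall>u0\<in>verts {1,2} {1,2,3,4}. \<forall>v0\<in>verts {1,2} {1,2,3,4}. {u0,v0} \<in> complete_edges {1,2} {1,2,3,4} \<longrightarrow>
  (\<exists>u\<in>verts {1,2} {1,2,3,4}. \<exists>v\<in>verts {1,2} {1,2,3,4}. {u0,u} \<in> complete_edges {1,2} {1,2,3,4} \<and> u \<noteq> v0 \<and>
    {v0,v} \<in> complete_edges {1,2} {1,2,3,4} \<and> v \<noteq> u0 \<and> ({u,v} \<notin> complete_edges {1,2} {1,2,3,4} \<or> {u,v} \<in> {ed 1 1, ed 1 2, ed 2 3, ed 2 4}))"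
  unfolding verts_def by (simp add: mem_complete_edges ed_def doubleton_eq_iff)

lemma tabB3: "\<forall>u0\<in>verts {1,2} {1,2,3,4}. \<forall>v0\<in>verts {1,2} {1,2,3,4}. u0 \<noteq> v0 \<longrightarrow> {u0,v0} \<notin> complete_edges {1,2} {1,2,3,4} \<longrightarrow>
  (\<exists>u\<in>verts {1,2} {1,2,3,4}. \<exists>v\<in>verts {1,2} {1,2,3,4}. {u0,u} \<in> complete_edges {1,2} {1,2,3,4} \<and> u \<noteq> v0 \<and>
    {v0,v} \<in> complete_edges {1,2} {1,2,3,4} \<and> v \<noteq> u0 \<and> ({u,v} \<notin> complete_edges {1,2} {1,2,3,4} \<or> {u,v} \<in> {ed 1 1, ed 1 2, ed 2 3, ed 2 4}))"
  unfolding verts_def by (simp add: mem_complete_edges ed_def doubleton_eq_iff)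

lemma exA3: "\<exists>u\<in>verts {1,2} {1,2,3,4}. \<exists>v\<in>verts {1,2} {1,2,3,4}. {u,v} \<in> complete_edges {1,2} {1,2,3,4}"
  by (rule bexI[of _ "A 1"], rule bexI[of _ "B 1"]) (auto simp: verts_def mem_complete_edges ed_def doubleton_eq_iff)

lemma negsub3: "{ed 1 1, ed 1 2, ed 2 3, ed 2 4} \<subseteq> complete_edges {1,2} {1,2,3,4}" by (simp add: ed_def mem_complete_edges doubleton_eq_iff)

lemma tabA4: "\<forall>u0\<in>verts {1,2,3} {1,2,3}. \<forall>v0\<in>verts {1,2,3} {1,2,3}. {u0,v0} \<in> complete_edges {1,2,3} {1,2,3} \<longrightarrow>
  (\<exists>u\<in>verts {1,2,3} {1,2,3}. \<exists>v\<in>verts {1,2,3} {1,2,3}. {u0,u} \<in> complete_edges {1,2,3} {1,2,3} \<and> u \<noteq> v0 \<and>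
    {v0,v} \<in> complete_edges {1,2,3} {1,2,3} \<and> v \<noteq> u0 \<and> ({u,v} \<notin> complete_edges {1,2,3} {1,2,3} \<or> {u,v} \<in> {ed 1 1, ed 2 2, ed 3 3}))"
  unfolding verts_def by (simp add: mem_complete_edges ed_def doubleton_eq_iff)

lemma tabB4: "\<forall>u0\<in>verts {1,2,3} {1,2,3}. \<forall>v0\<in>verts {1,2,3} {1,2,3}. u0 \<noteq> v0 \<longrightarrow> {u0,v0} \<notin> complete_edges {1,2,3} {1,2,3} \<longrightarrow>
  (\<exists>u\<in>verts {1,2,3} {1,2,3}. \<exists>v\<in>verts {1,2,3} {1,2,3}. {u0,u} \<in> complete_edges {1,2,3} {1,2,3} \<and> u \<noteq> v0 \<and>
    {v0,v} \<in> complete_edges {1,2,3} {1,2,3} \<and> v \<noteq> u0 \<and> ({u,v} \<notin> complete_edges {1,2,3} {1,2,3} \<or> {u,v} \<in> {ed 1 1, ed 2 2, ed 3 3}))"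
  unfolding verts_def by (simp add: mem_complete_edges ed_def doubleton_eq_iff)

lemma exA4: "\<exists>u\<in>verts {1,2,3} {1,2,3}. \<exists>v\<in>verts {1,2,3} {1,2,3}. {u,v} \<in> complete_edges {1,2,3} {1,2,3}"
  by (rule bexI[of _ "A 1"], rule bexI[of _ "B 1"]) (auto simp: verts_def mem_complete_edges ed_def doubleton_eq_iff)

lemma negsub4: "{ed 1 1, ed 2 2, ed 3 3} \<subseteq> complete_edges {1,2,3} {1,2,3}" by (simp add: ed_def mem_complete_edges doubleton_eq_iff)

lemma tabA5: "\<forall>u0\<in>verts {1,2,3} {1,2,3}. \<forall>v0\<in>verts {1,2,3} {1,2,3}. {u0,v0} \<in> complete_edges {1,2,3} {1,2,3} - {ed 1 3} \<longrightarrow>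
  (\<exists>u\<in>verts {1,2,3} {1,2,3}. \<exists>v\<in>verts {1,2,3} {1,2,3}. {u0,u} \<in> complete_edges {1,2,3} {1,2,3} - {ed 1 3} \<and> u \<noteq> v0 \<and>
    {v0,v} \<in> complete_edges {1,2,3} {1,2,3} - {ed 1 3} \<and> v \<noteq> u0 \<and> ({u,v} \<notin> complete_edges {1,2,3} {1,2,3} - {ed 1 3} \<or> {u,v} \<in> {ed 2 1, ed 3 2}))"
  unfolding verts_def by (simp add: mem_complete_edges ed_def doubleton_eq_iff)

lemma tabB5: "\<forall>u0\<in>verts {1,2,3} {1,2,3}. \<forall>v0\<in>verts {1,2,3} {1,2,3}. u0 \<noteq> v0 \<longrightarrow> {u0,v0} \<notin> complete_edges {1,2,3} {1,2,3} - {ed 1 3} \<longrightarrow>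
  (\<exists>u\<in>verts {1,2,3} {1,2,3}. \<exists>v\<in>verts {1,2,3} {1,2,3}. {u0,u} \<in> complete_edges {1,2,3} {1,2,3} - {ed 1 3} \<and> u \<noteq> v0 \<and>
    {v0,v} \<in> complete_edges {1,2,3} {1,2,3} - {ed 1 3} \<and> v \<noteq> u0 \<and> ({u,v} \<notin> complete_edges {1,2,3} {1,2,3} - {ed 1 3} \<or> {u,v} \<in> {ed 2 1, ed 3 2}))"
  unfolding verts_def by (simp add: mem_complete_edges ed_def doubleton_eq_iff)

lemma exA5: "\<exists>u\<in>verts {1,2,3} {1,2,3}. \<exists>v\<in>verts {1,2,3} {1,2,3}. {u,v} \<in> complete_edges {1,2,3} {1,2,3} - {ed 1 3}"
  by (rule bexI[of _ "A 1"], rule bexI[of _ "B 1"]) (auto simp: verts_def mem_complete_edges ed_def doubleton_eq_iff)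

lemma negsub5: "{ed 2 1, ed 3 2} \<subseteq> complete_edges {1,2,3} {1,2,3} - {ed 1 3}" by (simp add: ed_def mem_complete_edges doubleton_eq_iff)

lemma tabA6: "\<forall>u0\<in>verts {1,2,3,4} {1,2,3,4}. \<forall>v0\<in>verts {1,2,3,4} {1,2,3,4}. {u0,v0} \<in> complete_edges {1,2} {1,2} \<union> complete_edges {3,4} {1,2,3,4} \<longrightarrow>
  (\<exists>u\<in>verts {1,2,3,4} {1,2,3,4}. \<exists>v\<in>verts {1,2,3,4} {1,2,3,4}. {u0,u} \<in> complete_edges {1,2} {1,2} \<union> complete_edges {3,4} {1,2,3,4} \<and> u \<noteq> v0 \<and>
    {v0,v} \<in> complete_edges {1,2} {1,2} \<union> complete_edges {3,4} {1,2,3,4} \<and> v \<noteq> u0 \<and> ({u,v} \<notin> complete_edges {1,2} {1,2} \<union> complete_edges {3,4} {1,2,3,4} \<or> {u,v} \<in> {ed 1 1, ed 2 1, ed 3 2, ed 4 3, ed 4 4}))"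
  unfolding verts_def by (simp add: mem_complete_edges ed_def doubleton_eq_iff)

lemma tabB6: "\<forall>u0\<in>verts {1,2,3,4} {1,2,3,4}. \<forall>v0\<in>verts {1,2,3,4} {1,2,3,4}. u0 \<noteq> v0 \<longrightarrow> {u0,v0} \<notin> complete_edges {1,2} {1,2} \<union> complete_edges {3,4} {1,2,3,4} \<longrightarrow>
  (\<exists>u\<in>verts {1,2,3,4} {1,2,3,4}. \<exists>v\<in>verts {1,2,3,4} {1,2,3,4}. {u0,u} \<in> complete_edges {1,2} {1,2} \<union> complete_edges {3,4} {1,2,3,4} \<and> u \<noteq> v0 \<and>
    {v0,v} \<in> complete_edges {1,2} {1,2} \<union> complete_edges {3,4} {1,2,3,4} \<and> v \<noteq> u0 \<and> ({u,v} \<notin> complete_edges {1,2} {1,2} \<union> complete_edges {3,4} {1,2,3,4} \<or> {u,v} \<in> {ed 1 1, ed 2 1, ed 3 2, ed 4 3, ed 4 4}))"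
  unfolding verts_def by (simp add: mem_complete_edges ed_def doubleton_eq_iff)

lemma exA6: "\<exists>u\<in>verts {1,2,3,4} {1,2,3,4}. \<exists>v\<in>verts {1,2,3,4} {1,2,3,4}. {u,v} \<in> complete_edges {1,2} {1,2} \<union> complete_edges {3,4} {1,2,3,4}"
  by (rule bexI[of _ "A 1"], rule bexI[of _ "B 1"]) (auto simp: verts_def mem_complete_edges ed_def doubleton_eq_iff)

lemma negsub6: "{ed 1 1, ed 2 1, ed 3 2, ed 4 3, ed 4 4} \<subseteq> complete_edges {1,2} {1,2} \<union> complete_edges {3,4} {1,2,3,4}" by (simp add: ed_def mem_complete_edges doubleton_eq_iff)

lemma chordal_first:
  assumes ch: "chordal X Y E N" and ex: "\<exists>e\<in>E. e \<subseteq> W"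
  shows "\<exists>D e. (\<forall>d\<in>D. \<not> d \<subseteq> W) \<and> e \<in> E - D \<and> e \<subseteq> W \<and> signed_simplicial X Y (E - D) (N - D) e"
proof -
  obtain es where d: "distinct es" and s: "set es = E"
    and sim: "\<forall>i < length es. signed_simplicial X Y (E - set (take i es)) (N - set (take i es)) (es ! i)"
    using ch unfolding chordal_def by blast
  define P where "P i \<longleftrightarrow> i < length es \<and> es ! i \<subseteq> W" for i
  obtain e0 where "e0 \<in> E" "e0 \<subseteq> W" using ex by blast
  then obtain j where "j < length es" "es ! j = e0" using s by (metis in_set_conv_nth)
  hence "P j" unfolding P_def using \<open>e0 \<subseteq> W\<close> by simp
  define i0 where "i0 = (LEAST i. P i)"
  have Pi0: "P i0" unfolding i0_def by (rule LeastI, rule \<open>P j\<close>)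
  have notP: "\<And>i. i < i0 \<Longrightarrow> \<not> P i" unfolding i0_def using not_less_Least by blast
  define D where "D = set (take i0 es)"
  have "\<forall>d\<in>D. \<not> d \<subseteq> W"
  proof
    fix d assume "d \<in> D"
    then obtain i where "i < length (take i0 es)" "take i0 es ! i = d" unfolding D_def by (metis in_set_conv_nth)
    hence "i < i0" "i < length es" "es ! i = d" by auto
    thus "\<not> d \<subseteq> W" using notP[of i] unfolding P_def by auto
  qed
  moreover have "es ! i0 \<in> E - D"
  proof -
    have "i0 < length es" using Pi0 unfolding P_def by simp
    hence "es ! i0 \<in> E" using s by auto
    moreover have "es ! i0 \<notin> set (take i0 es)"
    proof
      assume "es ! i0 \<in> set (take i0 es)"
      then obtain j where "j < length (take i0 es)" "take i0 es ! j = es ! i0" by (metis in_set_conv_nth)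
      hence "j < i0" "es ! j = es ! i0" by auto
      thus False using d \<open>i0 < length es\<close> by (simp add: nth_eq_iff_index_eq)
    qed
    ultimately show ?thesis unfolding D_def by blast
  qed
  moreover have "es ! i0 \<subseteq> W" using Pi0 unfolding P_def by simp
  moreover have "signed_simplicial X Y (E - D) (N - D) (es ! i0)"
    using sim Pi0 unfolding P_def D_def by simp
  ultimately show ?thesis by blast
qed


lemma embed_obstruct:
  assumes G: "signed_bigraph X Y E N"
    and ci: "contains_induced (X \<union> Y) E N (VH, EH, NH)"
    and NegH: "Neg \<subseteq> NH"
    and EHne: "\<exists>u\<in>VH. \<exists>v\<in>VH. {u,v} \<in> EH"
    and tab: "\<forall>u0\<in>VH. \<forall>v0\<in>VH. {u0,v0} \<in> EH \<longrightarrow>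
      (\<exists>u\<in>VH. \<exists>v\<in>VH. {u0,u} \<in> EH \<and> u \<noteq> v0 \<and> {v0,v} \<in> EH \<and> v \<noteq> u0 \<and> ({u,v} \<notin> EH \<or> {u,v} \<in> Neg))"
  shows "\<not> chordal X Y E N"
proof
  assume ch: "chordal X Y E N"
  have "\<exists>f. inj_on f VH \<and> f ` VH \<subseteq> X \<union> Y \<and>
      (\<forall>u\<in>VH. \<forall>v\<in>VH. ({f u, f v} \<in> E \<longleftrightarrow> {u, v} \<in> EH) \<and> ({f u, f v} \<in> N \<longleftrightarrow> {u, v} \<in> NH))"
    using ci unfolding contains_induced_def by simp
  then obtain f where inj: "inj_on f VH"
    and adj: "\<forall>u\<in>VH. \<forall>v\<in>VH. ({f u, f v} \<in> E \<longleftrightarrow> {u, v} \<in> EH) \<and> ({f u, f v} \<in> N \<longleftrightarrow> {u, v} \<in> NH)"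
    by blast
  have adjE: "\<And>a b. a \<in> VH \<Longrightarrow> b \<in> VH \<Longrightarrow> ({f a, f b} \<in> E) = ({a, b} \<in> EH)" using adj by blast
  have adjN: "\<And>a b. a \<in> VH \<Longrightarrow> b \<in> VH \<Longrightarrow> ({f a, f b} \<in> N) = ({a, b} \<in> NH)" using adj by blast
  define W where "W = f ` VH"
  have "\<exists>e\<in>E. e \<subseteq> W"
  proof -
    obtain u v where u: "u \<in> VH" and v: "v \<in> VH" and uv: "{u,v} \<in> EH" using EHne by blast
    have "{f u, f v} \<in> E" using adjE[OF u v] uv by simp
    moreover have "{f u, f v} \<subseteq> W" using u v unfolding W_def by simp
    ultimately show ?thesis by blast
  qed
  from chordal_first[OF ch this] obtain D e where D: "\<forall>d\<in>D. \<not> d \<subseteq> W" and e: "e \<in> E - D" "e \<subseteq> W"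
    and si: "signed_simplicial X Y (E - D) (N - D) e"
    by blast
  have "e \<in> E" using e by simp
  from sb_edge[OF G this] obtain x y where "x \<in> X" "y \<in> Y" and exy: "e = {x, y}" by blast
  obtain u0 where u0: "u0 \<in> VH" "x = f u0" using e exy unfolding W_def by blast
  obtain v0 where v0: "v0 \<in> VH" "y = f v0" using e exy unfolding W_def by blast
  have "{u0, v0} \<in> EH" using adjE[OF u0(1) v0(1)] u0 v0 e exy by simp
  then obtain u v where uv: "u \<in> VH" "v \<in> VH" "{u0,u} \<in> EH" "u \<noteq> v0" "{v0,v} \<in> EH" "v \<noteq> u0"
     "{u,v} \<notin> EH \<or> {u,v} \<in> Neg"
    using tab u0 v0 by blast
  have G': "signed_bigraph X Y (E - D) (N - D)" by (rule sb_sub[OF G])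
  have inW: "{f a, f b} \<notin> D" if a: "a \<in> VH" and b: "b \<in> VH" for a b
  proof -
    have "{f a, f b} \<subseteq> W" unfolding W_def using a b by simp
    thus ?thesis using D by blast
  qed
  have "{f u0, f u} \<in> E - D" using adjE[OF u0(1) uv(1)] uv(3) inW[OF u0(1) uv(1)] by blast
  moreover have "{f v0, f v} \<in> E - D" using adjE[OF v0(1) uv(2)] uv(5) inW[OF v0(1) uv(2)] by blast
  moreover have "f u \<noteq> f v0" using inj uv u0 v0 by (meson inj_on_eq_iff)
  moreover have "f v \<noteq> f u0" using inj uv u0 v0 by (meson inj_on_eq_iff)
  moreover have "{f u0, f v0} \<in> E - D" using e exy u0 v0 by simp
  moreover have "signed_simplicial X Y (E - D) (N - D) {f u0, f v0}" using si exy u0 v0 by simp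
  ultimately have r: "{f u, f v} \<in> E - D \<and> {f u, f v} \<notin> N - D"
    using simp_pair[OF G', of "f u0" "f v0" "f u" "f v"] by blast
  hence "{u, v} \<in> EH" using adjE[OF uv(1) uv(2)] by blast
  hence "{u, v} \<in> NH" using uv(7) NegH by blast
  hence "{f u, f v} \<in> N" using adjN[OF uv(1) uv(2)] by blast
  thus False using r inW[OF uv(1) uv(2)] by blast
qed

lemma family_mem: "H \<in> family V Eall Neg \<Longrightarrow> \<exists>S. H = (V, Eall, Neg \<union> S)"
  unfolding family_def by blast

lemma dir1:
  assumes G: "signed_bigraph X Y E N" and ch: "chordal X Y E N"
  shows "\<forall>H \<in> F1 \<union> F2 \<union> F3 \<union> F4 \<union> F5 \<union> F6. \<not> contains_induced (X \<union> Y) E N H"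
proof (intro ballI notI)
  fix H assume H: "H \<in> F1 \<union> F2 \<union> F3 \<union> F4 \<union> F5 \<union> F6" and ci: "contains_induced (X \<union> Y) E N H"
  have gen: "\<And>VH Eall Neg. H \<in> family VH Eall Neg \<Longrightarrow> (\<exists>u\<in>VH. \<exists>v\<in>VH. {u,v} \<in> Eall) \<Longrightarrow>
      (\<forall>u0\<in>VH. \<forall>v0\<in>VH. {u0,v0} \<in> Eall \<longrightarrow>
      (\<exists>u\<in>VH. \<exists>v\<in>VH. {u0,u} \<in> Eall \<and> u \<noteq> v0 \<and> {v0,v} \<in> Eall \<and> v \<noteq> u0 \<and> ({u,v} \<notin> Eall \<or> {u,v} \<in> Neg)))
      \<Longrightarrow> False"
  proof -
    fix VH Eall Neg assume "H \<in> family VH Eall Neg" and ex: "\<exists>u\<in>VH. \<exists>v\<in>VH. {u,v} \<in> Eall"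
      and tab: "\<forall>u0\<in>VH. \<forall>v0\<in>VH. {u0,v0} \<in> Eall \<longrightarrow>
      (\<exists>u\<in>VH. \<exists>v\<in>VH. {u0,u} \<in> Eall \<and> u \<noteq> v0 \<and> {v0,v} \<in> Eall \<and> v \<noteq> u0 \<and> ({u,v} \<notin> Eall \<or> {u,v} \<in> Neg))"
    then obtain S where HS: "H = (VH, Eall, Neg \<union> S)" using family_mem by blast
    have "\<not> chordal X Y E N"
      by (rule embed_obstruct[OF G ci[unfolded HS] Un_upper1 ex tab])
    thus False using ch by blast
  qed
  from H have "H \<in> F1 \<or> H \<in> F2 \<or> H \<in> F3 \<or> H \<in> F4 \<or> H \<in> F5 \<or> H \<in> F6" by blast
  thus False
  proof (elim disjE)
    assume "H \<in> F1" thus False unfolding F1_def by (rule gen[OF _ exA1 tabA1])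
  next
    assume "H \<in> F2" thus False unfolding F2_def by (rule gen[OF _ exA2 tabA2])
  next
    assume "H \<in> F3" thus False unfolding F3_def by (rule gen[OF _ exA3 tabA3])
  next
    assume "H \<in> F4" thus False unfolding F4_def by (rule gen[OF _ exA4 tabA4])
  next
    assume "H \<in> F5" thus False unfolding F5_def by (rule gen[OF _ exA5 tabA5])
  next
    assume "H \<in> F6" thus False unfolding F6_def by (rule gen[OF _ exA6 tabA6])
  qed
qed

lemma delete_keeps:
  assumes G: "signed_bigraph X Y E N" and eE: "e \<in> E" and si: "signed_simplicial X Y E N e"
    and ci: "contains_induced (X \<union> Y) (E - {e}) (N - {e}) (VH, EH, NH)"
    and NegH: "Neg \<subseteq> NH"
    and tab: "\<forall>u0\<in>VH. \<forall>v0\<in>VH. u0 \<noteq> v0 \<longrightarrow> {u0,v0} \<notin> EH \<longrightarrow>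
      (\<exists>u\<in>VH. \<exists>v\<in>VH. {u0,u} \<in> EH \<and> u \<noteq> v0 \<and> {v0,v} \<in> EH \<and> v \<noteq> u0 \<and> ({u,v} \<notin> EH \<or> {u,v} \<in> Neg))"
  shows "contains_induced (X \<union> Y) E N (VH, EH, NH)"
proof -
  have "\<exists>f. inj_on f VH \<and> f ` VH \<subseteq> X \<union> Y \<and>
      (\<forall>u\<in>VH. \<forall>v\<in>VH. ({f u, f v} \<in> E - {e} \<longleftrightarrow> {u, v} \<in> EH) \<and> ({f u, f v} \<in> N - {e} \<longleftrightarrow> {u, v} \<in> NH))"
    using ci unfolding contains_induced_def by simp
  then obtain f where inj: "inj_on f VH" and sub: "f ` VH \<subseteq> X \<union> Y"
    and adj: "\<forall>u\<in>VH. \<forall>v\<in>VH. ({f u, f v} \<in> E - {e} \<longleftrightarrow> {u, v} \<in> EH) \<and> ({f u, f v} \<in> N - {e} \<longleftrightarrow> {u, v} \<in> NH)"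
    by blast
  have adjE: "\<And>a b. a \<in> VH \<Longrightarrow> b \<in> VH \<Longrightarrow> ({f a, f b} \<in> E - {e}) = ({a, b} \<in> EH)" using adj by blast
  have adjN: "\<And>a b. a \<in> VH \<Longrightarrow> b \<in> VH \<Longrightarrow> ({f a, f b} \<in> N - {e}) = ({a, b} \<in> NH)" using adj by blast
  show ?thesis
  proof (cases "e \<subseteq> f ` VH")
    case False
    have ne: "{f a, f b} \<noteq> e" if "a \<in> VH" "b \<in> VH" for a b
    proof
      assume "{f a, f b} = e"
      moreover have "{f a, f b} \<subseteq> f ` VH" using that by simp
      ultimately show False using False by simp
    qed
    show ?thesis unfolding contains_induced_def
    proof (simp, intro exI conjI ballI)
      show "inj_on f VH" by fact
      show "f ` VH \<subseteq> X \<union> Y" by fact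
      fix u v assume u: "u \<in> VH" and v: "v \<in> VH"
      show "({f u, f v} \<in> E) = ({u, v} \<in> EH)" using adjE[OF u v] ne[OF u v] by blast
      show "({f u, f v} \<in> N) = ({u, v} \<in> NH)" using adjN[OF u v] ne[OF u v] by blast
    qed
  next
    case True
    from sb_edge[OF G eE] obtain x y where x: "x \<in> X" and y: "y \<in> Y" and exy: "e = {x, y}" by blast
    obtain u0 where u0: "u0 \<in> VH" "x = f u0" using True exy by blast
    obtain v0 where v0: "v0 \<in> VH" "y = f v0" using True exy by blast
    have "x \<noteq> y" using x y sb_disj[OF G] by blast
    hence "u0 \<noteq> v0" using u0 v0 by blast
    moreover have "{u0, v0} \<notin> EH" using adjE[OF u0(1) v0(1)] u0 v0 exy by simp
    ultimately obtain u v where uv: "u \<in> VH" "v \<in> VH" "{u0,u} \<in> EH" "u \<noteq> v0" "{v0,v} \<in> EH" "v \<noteq> u0"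
       "{u,v} \<notin> EH \<or> {u,v} \<in> Neg"
      using tab u0 v0 by blast
    have e1: "{f u0, f u} \<in> E" using adjE[OF u0(1) uv(1)] uv(3) by blast
    have e2: "{f v0, f v} \<in> E" using adjE[OF v0(1) uv(2)] uv(5) by blast
    have n1: "f u \<noteq> f v0" using inj uv u0 v0 by (meson inj_on_eq_iff)
    have n2: "f v \<noteq> f u0" using inj uv u0 v0 by (meson inj_on_eq_iff)
    have "{f u0, f v0} \<in> E" using eE exy u0 v0 by simp
    moreover have "signed_simplicial X Y E N {f u0, f v0}" using si exy u0 v0 by simp
    ultimately have r: "{f u, f v} \<in> E \<and> {f u, f v} \<notin> N"
      using simp_pair[OF G _ _ e1 n1 e2 n2] by blast
    have "f u \<noteq> f u0"
    proof
      assume "f u = f u0"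
      hence "{f u0} \<in> E" using e1 by simp
      thus False using sb_nosing[OF G] by blast
    qed
    hence "{f u, f v} \<noteq> e" using exy u0 v0 n1 by (auto simp: doubleton_eq_iff)
    hence "{u, v} \<in> EH" using adjE[OF uv(1) uv(2)] r by blast
    hence "{u, v} \<in> NH" using uv(7) NegH by blast
    hence "{f u, f v} \<in> N" using adjN[OF uv(1) uv(2)] by blast
    thus ?thesis using r by blast
  qed
qed

lemma delete_Ffree:
  assumes G: "signed_bigraph X Y E N" and eE: "e \<in> E" and si: "signed_simplicial X Y E N e"
    and F: "Ffree (X \<union> Y) E N"
  shows "Ffree (X \<union> Y) (E - {e}) (N - {e})"
  unfolding Ffree_def
proof (intro ballI notI)
  fix H assume H: "H \<in> F1 \<union> F2 \<union> F3 \<union> F4 \<union> F5 \<union> F6" and ci: "contains_induced (X \<union> Y) (E - {e}) (N - {e}) H"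
  have gen: "\<And>VH Eall Neg. H \<in> family VH Eall Neg \<Longrightarrow>
      (\<forall>u0\<in>VH. \<forall>v0\<in>VH. u0 \<noteq> v0 \<longrightarrow> {u0,v0} \<notin> Eall \<longrightarrow>
      (\<exists>u\<in>VH. \<exists>v\<in>VH. {u0,u} \<in> Eall \<and> u \<noteq> v0 \<and> {v0,v} \<in> Eall \<and> v \<noteq> u0 \<and> ({u,v} \<notin> Eall \<or> {u,v} \<in> Neg)))
      \<Longrightarrow> contains_induced (X \<union> Y) E N H"
  proof -
    fix VH Eall Neg assume "H \<in> family VH Eall Neg"
      and tab: "\<forall>u0\<in>VH. \<forall>v0\<in>VH. u0 \<noteq> v0 \<longrightarrow> {u0,v0} \<notin> Eall \<longrightarrow>
      (\<exists>u\<in>VH. \<exists>v\<in>VH. {u0,u} \<in> Eall \<and> u \<noteq> v0 \<and> {v0,v} \<in> Eall \<and> v \<noteq> u0 \<and> ({u,v} \<notin> Eall \<or> {u,v} \<in> Neg))"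
    then obtain S where HS: "H = (VH, Eall, Neg \<union> S)" using family_mem by blast
    show "contains_induced (X \<union> Y) E N H" unfolding HS
      by (rule delete_keeps[OF G eE si ci[unfolded HS] Un_upper1 tab])
  qed
  have "contains_induced (X \<union> Y) E N H"
  proof -
    from H have "H \<in> F1 \<or> H \<in> F2 \<or> H \<in> F3 \<or> H \<in> F4 \<or> H \<in> F5 \<or> H \<in> F6" by blast
    thus ?thesis
    proof (elim disjE)
      assume "H \<in> F1" thus ?thesis unfolding F1_def by (rule gen[OF _ tabB1])
    next
      assume "H \<in> F2" thus ?thesis unfolding F2_def by (rule gen[OF _ tabB2])
    next
      assume "H \<in> F3" thus ?thesis unfolding F3_def by (rule gen[OF _ tabB3])
    next
      assume "H \<in> F4" thus ?thesis unfolding F4_def by (rule gen[OF _ tabB4])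
    next
      assume "H \<in> F5" thus ?thesis unfolding F5_def by (rule gen[OF _ tabB5])
    next
      assume "H \<in> F6" thus ?thesis unfolding F6_def by (rule gen[OF _ tabB6])
    qed
  qed
  thus False using F H unfolding Ffree_def by blast
qed

lemma delete_nonsep:
  assumes G: "signed_bigraph X Y E N" and eE: "e \<in> E" and si: "signed_simplicial X Y E N e"
    and ns: "\<not> separable E"
  shows "\<not> separable (E - {e})"
proof
  assume "separable (E - {e})"
  then obtain a b c d where dis: "distinct [a, b, c, d]" and ab: "{a, b} \<in> E - {e}" and cd: "{c, d} \<in> E - {e}"
    and n: "{a, c} \<notin> E - {e}" "{a, d} \<notin> E - {e}" "{b, c} \<notin> E - {e}" "{b, d} \<notin> E - {e}"
    unfolding separable_def by blast
  have key: "False" if e: "e = {p, q}" and pq: "{p, q} \<in> E"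
    and p': "{p, p'} \<in> E" "p' \<noteq> q" and q': "{q, q'} \<in> E" "q' \<noteq> p"
    and ne: "{p', q'} \<noteq> {p, q}" and nn: "{p', q'} \<notin> E - {e}" for p q p' q'
  proof -
    have "{p', q'} \<in> E \<and> {p', q'} \<notin> N" using simp_pair[OF G pq _ p' q'] si e by blast
    thus False using nn ne e by blast
  qed
  show False
  proof (cases "{a, c} = e \<or> {a, d} = e \<or> {b, c} = e \<or> {b, d} = e")
    case False
    hence "{a, c} \<notin> E" "{a, d} \<notin> E" "{b, c} \<notin> E" "{b, d} \<notin> E" using n by blast+
    moreover have "{a, b} \<in> E" "{c, d} \<in> E" using ab cd by blast+
    ultimately have "separable E" unfolding separable_def using dis by blast
    thus False using ns by blast
  next
    case True
    have ab': "{a, b} \<in> E" "{b, a} \<in> E" using ab by (auto simp: insert_commute)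
    have cd': "{c, d} \<in> E" "{d, c} \<in> E" using cd by (auto simp: insert_commute)
    have nn: "{b, d} \<notin> E - {e}" "{b, c} \<notin> E - {e}" "{a, d} \<notin> E - {e}" "{a, c} \<notin> E - {e}" using n by blast+
    from True show False
    proof (elim disjE)
      assume h: "{a, c} = e"
      show False by (rule key[of a c b d]) (use h eE ab' cd' dis nn in \<open>auto simp: doubleton_eq_iff\<close>)
    next
      assume h: "{a, d} = e"
      show False by (rule key[of a d b c]) (use h eE ab' cd' dis nn in \<open>auto simp: doubleton_eq_iff\<close>)
    next
      assume h: "{b, c} = e"
      show False by (rule key[of b c a d]) (use h eE ab' cd' dis nn in \<open>auto simp: doubleton_eq_iff insert_commute\<close>)
    next
      assume h: "{b, d} = e"
      show False by (rule key[of b d a c]) (use h eE ab' cd' dis nn in \<open>auto simp: doubleton_eq_iff insert_commute\<close>)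
    qed
  qed
qed

lemma lemmaA:
  assumes G: "signed_bigraph X Y E N" and ns: "\<not> separable E" and F: "Ffree (X \<union> Y) E N"
    and ne: "E \<noteq> {}"
  shows "\<exists>e\<in>E. signed_simplicial X Y E N e"
proof -
  have "SBF X Y E N" unfolding SBF_def SB_def SBF_axioms_def using G ns F by blast
  thus ?thesis using SBF.lemmaA_loc ne by blast
qed

lemma dir2_aux:
  "\<forall>E N. signed_bigraph X Y E N \<longrightarrow> \<not> separable E \<longrightarrow> Ffree (X \<union> Y) E N \<longrightarrow> card E = n \<longrightarrow> chordal X Y E N"
proof (induction n)
  case 0
  show ?case
  proof (intro allI impI)
    fix E N assume G: "signed_bigraph X Y E N" and "card E = 0"
    hence "E = {}" using sb_finiteE[OF G] by simp
    thus "chordal X Y E N" unfolding chordal_def by (intro exI[of _ "[]"]) simp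
  qed
next
  case (Suc n)
  show ?case
  proof (intro allI impI)
    fix E N assume G: "signed_bigraph X Y E N" and ns: "\<not> separable E" and F: "Ffree (X \<union> Y) E N"
      and c: "card E = Suc n"
    have "E \<noteq> {}" using c by auto
    then obtain e where eE: "e \<in> E" and si: "signed_simplicial X Y E N e" using lemmaA[OF G ns F] by blast
    have G': "signed_bigraph X Y (E - {e}) (N - {e})" by (rule sb_sub[OF G])
    have ns': "\<not> separable (E - {e})" by (rule delete_nonsep[OF G eE si ns])
    have F': "Ffree (X \<union> Y) (E - {e}) (N - {e})" by (rule delete_Ffree[OF G eE si F])
    have "card (E - {e}) = n" using c eE sb_finiteE[OF G] by simp
    hence "chordal X Y (E - {e}) (N - {e})" using Suc.IH G' ns' F' by blast
    then obtain es where d: "distinct es" and s: "set es = E - {e}"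
      and sim: "\<forall>i < length es. signed_simplicial X Y (E - {e} - set (take i es)) (N - {e} - set (take i es)) (es ! i)"
      unfolding chordal_def by blast
    show "chordal X Y E N" unfolding chordal_def
    proof (intro exI[of _ "e # es"] conjI allI impI)
      show "distinct (e # es)" using d s by simp
      show "set (e # es) = E" using s eE by auto
      fix i assume i: "i < length (e # es)"
      show "signed_simplicial X Y (E - set (take i (e # es))) (N - set (take i (e # es))) ((e # es) ! i)"
      proof (cases i)
        case 0 thus ?thesis using si by simp
      next
        case (Suc j)
        hence "j < length es" using i by simp
        hence "signed_simplicial X Y (E - {e} - set (take j es)) (N - {e} - set (take j es)) (es ! j)"
          using sim by blast
        moreover have "E - set (take i (e # es)) = E - {e} - set (take j es)" using Suc by auto
        moreover have "N - set (take i (e # es)) = N - {e} - set (take j es)" using Suc by auto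
        ultimately show ?thesis using Suc by simp
      qed
    qed
  qed
qed

theorem theorem3p2:
  fixes X Y :: "'v set" and E N :: "'v set set"
  assumes "signed_bigraph X Y E N"
    and "\<not> separable E"
  shows "chordal X Y E N \<longleftrightarrow>
    (\<forall>H \<in> F1 \<union> F2 \<union> F3 \<union> F4 \<union> F5 \<union> F6. \<not> contains_induced (X \<union> Y) E N H)"
proof
  assume "chordal X Y E N" thus "\<forall>H \<in> F1 \<union> F2 \<union> F3 \<union> F4 \<union> F5 \<union> F6. \<not> contains_induced (X \<union> Y) E N H"
    using dir1[OF assms(1)] by blast
next
  assume "\<forall>H \<in> F1 \<union> F2 \<union> F3 \<union> F4 \<union> F5 \<union> F6. \<not> contains_induced (X \<union> Y) E N H"
  hence "Ffree (X \<union> Y) E N" unfolding Ffree_def by blast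
  thus "chordal X Y E N" using dir2_aux assms by blast
qed

end
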